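(* Let $\ell\ge2$, let $\mathcal R$ be an $\ell$-vertex rule with associated graphs $(G(m))_{m\ge0}$ on $[n]$, and let $0<\alpha\le1$. Let $\mathcal C(\alpha)$ denote the event that for all integers $0\le m\le n^2$ and $1\le k\le \frac{\alpha}{16}\frac{n}{\log n}$ the following holds: if $N_{\ge k}(m)\ge\alpha n$, then $L_1(m+\Delta)>\frac{\alpha}{\ell^2}n$, where $\Delta=\bigl\lceil \frac{4}{\alpha^{\ell-1}}\frac{n}{k}\bigr\rceil$. Then $\Pr(\mathcal C(\alpha))\ge 1-n^{-1}$.
   Context: $\ell$-vertex rule: fix an integer $\ell\ge2$. For each $n$, let $(\underline v_1,\underline v_2,\dots)$ be an i.i.d. sequence, where each $\underline v_m=(v_{m,1},\dots,v_{m,\ell})$ consists of $\ell$ vertices of $[n]$ chosen independently and uniformly at random. There is a filtration $\mathcal F_0\subseteq\mathcal F_1\subseteq\cdots$ such that $\underline v_m$ is $\mathcal F_m$-measurable and independent of $\mathcal F_{m-1}$. An $\ell$-vertex rule is a random sequence of graphs $(G(m))_{m\ge0}$ on $[n]$ such that: (i) $G(0)$ is empty; (ii) for $m\ge1$, $G(m)=G(m-1)\cup E_m$ where $E_m$ is a (possibly empty) $\mathcal F_m$-measurable set of edges each joining two vertices of $\underline v_m$; (iii) if the $\ell$ vertices of $\underline v_m$ lie in $\ell$ distinct components of $G(m-1)$, then $E_m\ne\varnothing$. Notation: $L_1(m)$ is the number of vertices in a largest component of $G(m)$; $N_{\ge k}(m)$ is the number of vertices of $G(m)$ in components with at least $k$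 vertices; $\log$ is the natural logarithm. *)

theory Defs
  imports "HOL-Probability.Probability"
begin

text \<open>Graphs on vertex set [n] = {1..n} are represented by their edge sets,
  an edge being a two-element set of vertices.\<close>

definition adj :: "nat set set \<Rightarrow> (nat \<times> nat) set" where
  "adj G = {(a, b). {a, b} \<in> G}"

definition comp :: "nat set set \<Rightarrow> nat \<Rightarrow> nat set" where
  "comp G x = {y. (x, y) \<in> (adj G)\<^sup>*}"

definition L1 :: "nat \<Rightarrow> nat set set \<Rightarrow> nat" where
  "L1 n G = Max ((\<lambda>x. card (comp G x)) ` {1..n})"

definition Nge :: "nat \<Rightarrow> nat set set \<Rightarrow> nat \<Rightarrow> nat" where
  "Nge n G k = card {x \<in> {1..n}. card (comp G x) \<ge> k}"

definition Gr :: "(nat \<Rightarrow> 'a \<Rightarrow> nat set set) \<Rightarrow> nat \<Rightarrow> 'a \<Rightarrow> nat set set" where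
  "Gr E m \<omega> = (\<Union>i\<in>{1..m}. E i \<omega>)"

text \<open>An l-vertex rule on [n]: probability space M, filtration F (F 0 \<subseteq> F 1 \<subseteq> ...),
  tuples v m (m >= 1) of l uniform vertices, F m-measurable and independent of F (m-1),
  and F m-measurable edge sets E m, each edge joining two vertices of v m,
  nonempty whenever the l vertices lie in l distinct components of G(m-1).\<close>
definition ell_vertex_rule ::
  "'a measure \<Rightarrow> nat \<Rightarrow> nat \<Rightarrow> (nat \<Rightarrow> 'a measure) \<Rightarrow> (nat \<Rightarrow> 'a \<Rightarrow> nat list)
     \<Rightarrow> (nat \<Rightarrow> 'a \<Rightarrow> nat set set) \<Rightarrow> bool" where
  "ell_vertex_rule M l n F v E \<longleftrightarrow>
     prob_space M \<and>
     (\<forall>m. subalgebra M (F m)) \<and>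
     (\<forall>m. sets (F m) \<subseteq> sets (F (Suc m))) \<and>
     (\<forall>m\<ge>1. v m \<in> measurable (F m) (count_space UNIV)) \<and>
     (\<forall>m\<ge>1. \<forall>\<omega>\<in>space M. length (v m \<omega>) = l \<and> set (v m \<omega>) \<subseteq> {1..n}) \<and>
     (\<forall>m\<ge>1. \<forall>t. length t = l \<and> set t \<subseteq> {1..n} \<longrightarrow>
         measure M {\<omega>\<in>space M. v m \<omega> = t} = 1 / real n ^ l) \<and>
     (\<forall>m\<ge>1. \<forall>A\<in>sets (F (m - 1)). \<forall>t.
         measure M (A \<inter> {\<omega>\<in>space M. v m \<omega> = t})
           = measure M A * measure M {\<omega>\<in>space M. v m \<omega> = t}) \<and>
     (\<forall>m\<ge>1. E m \<in> measurable (F m) (count_space UNIV)) \<and>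
     (\<forall>m\<ge>1. \<forall>\<omega>\<in>space M. \<forall>e\<in>E m \<omega>.
         \<exists>x y. x \<in> set (v m \<omega>) \<and> y \<in> set (v m \<omega>) \<and> x \<noteq> y \<and> e = {x, y}) \<and>
     (\<forall>m\<ge>1. \<forall>\<omega>\<in>space M.
         (\<forall>i<l. \<forall>j<l. i \<noteq> j \<longrightarrow> (v m \<omega> ! i, v m \<omega> ! j) \<notin> (adj (Gr E (m - 1) \<omega>))\<^sup>*)
         \<longrightarrow> E m \<omega> \<noteq> {})"

definition event_C :: "nat \<Rightarrow> nat \<Rightarrow> real \<Rightarrow> (nat \<Rightarrow> 'a \<Rightarrow> nat set set) \<Rightarrow> 'a \<Rightarrow> bool" where
  "event_C n l \<alpha> E \<omega> \<longleftrightarrow>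
     (\<forall>m k. m \<le> n ^ 2 \<and> 1 \<le> k \<and> real k \<le> \<alpha> / 16 * (real n / ln (real n))
        \<and> real (Nge n (Gr E m \<omega>) k) \<ge> \<alpha> * real n
        \<longrightarrow> real (L1 n (Gr E (m + nat \<lceil>4 / \<alpha> ^ (l - 1) * (real n / real k)\<rceil>) \<omega>))
              > \<alpha> / real l ^ 2 * real n)"

end

theory Submission
  imports Defs
begin

lemma adj_sym: "(a,b) \<in> adj G \<longleftrightarrow> (b,a) \<in> adj G"
  by (auto simp: adj_def insert_commute)

lemma rtr_sym: "(a,b) \<in> (adj G)\<^sup>* \<Longrightarrow> (b,a) \<in> (adj G)\<^sup>*"
proof (induction rule: rtrancl_induct)
  case base then show ?case by simp
next
  case (step y z)
  then have "(z,y) \<in> adj G" using adj_sym by blast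
  then show ?case using step(3) by (meson converse_rtrancl_into_rtrancl)
qed

lemma adj_mono: "G \<subseteq> G' \<Longrightarrow> adj G \<subseteq> adj G'"
  by (auto simp: adj_def)

lemma rtr_mono: "G \<subseteq> G' \<Longrightarrow> (adj G)\<^sup>* \<subseteq> (adj G')\<^sup>*"
  by (simp add: adj_mono rtrancl_mono)

lemma comp_mono: "G \<subseteq> G' \<Longrightarrow> comp G x \<subseteq> comp G' x"
  using rtr_mono by (auto simp: comp_def)

lemma comp_self: "x \<in> comp G x"
  by (simp add: comp_def)

lemma comp_eq: "y \<in> comp G x \<Longrightarrow> comp G y = comp G x"
  unfolding comp_def using rtr_sym
  by (auto intro: rtrancl_trans)

lemma comp_sub: assumes "\<forall>e\<in>G. e \<subseteq> V" shows "comp G x \<subseteq> insert x V"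
proof
  fix y assume "y \<in> comp G x"
  then have "(x,y) \<in> (adj G)\<^sup>*" by (simp add: comp_def)
  then show "y \<in> insert x V"
  proof (induction rule: rtrancl_induct)
    case base then show ?case by simp
  next
    case (step y z) then show ?case using assms by (auto simp: adj_def)
  qed
qed

lemma comp_fin: assumes "\<forall>e\<in>G. e \<subseteq> {1..n}" shows "finite (comp G x)"
  using comp_sub[OF assms] finite_subset by blast

lemma comp_sub_n: assumes "\<forall>e\<in>G. e \<subseteq> {1..n}" "x \<in> {1..n}" shows "comp G x \<subseteq> {1..n}"
  using comp_sub[OF assms(1)] assms(2) by blast

lemma card_comp_le_L1: assumes "x \<in> {1..(n::nat)}" shows "card (comp G x) \<le> L1 n G"
  unfolding L1_def using assms by (intro Max_ge) auto

lemma L1_mono: assumes "G \<subseteq> G'" "\<forall>e\<in>G'. e \<subseteq> {1..n}" "n \<ge> 1"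
  shows "L1 n G \<le> L1 n G'"
proof -
  have "\<forall>x\<in>{1..n}. card (comp G x) \<le> L1 n G'"
  proof
    fix x assume x: "x \<in> {1..n}"
    have "card (comp G x) \<le> card (comp G' x)"
      by (intro card_mono comp_fin[OF assms(2)] comp_mono assms(1))
    also have "\<dots> \<le> L1 n G'" using card_comp_le_L1[OF x] .
    finally show "card (comp G x) \<le> L1 n G'" .
  qed
  then show ?thesis unfolding L1_def using assms(3) by (subst Max_le_iff) auto
qed

definition Phi :: "nat set \<Rightarrow> nat set set \<Rightarrow> nat" where
  "Phi W G = card ((\<lambda>x. comp G x) ` W)"

definition Good :: "nat \<Rightarrow> nat set \<Rightarrow> nat set set \<Rightarrow> nat list set" where
  "Good l W G = {t. length t = l \<and> set t \<subseteq> W \<and>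
     (\<forall>i<l. \<forall>j<l. i \<noteq> j \<longrightarrow> (t!i, t!j) \<notin> (adj G)\<^sup>*)}"

lemma comp_img: assumes "G \<subseteq> G'" "x \<in> W"
  shows "comp G' x = (\<Union>y\<in>comp G x. comp G' y)"
proof -
  have "\<And>y. y \<in> comp G x \<Longrightarrow> comp G' y = comp G' x"
    using comp_mono[OF assms(1)] comp_eq by blast
  then show ?thesis using comp_self[of x G] by blast
qed

definition lift :: "nat set set \<Rightarrow> nat set \<Rightarrow> nat set" where
  "lift G' C = (\<Union>y\<in>C. comp G' y)"

lemma Phi_img: assumes "G \<subseteq> G'"
  shows "(\<lambda>x. comp G' x) ` W = lift G' ` ((\<lambda>x. comp G x) ` W)"
  unfolding image_image lift_def by (rule image_cong[OF refl]) (rule comp_img[OF assms])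

lemma Phi_mono: assumes "G \<subseteq> G'" "finite W" shows "Phi W G' \<le> Phi W G"
  unfolding Phi_def Phi_img[OF assms(1)] by (rule card_image_le) (use assms(2) in simp)

lemma Phi_less: assumes "G \<subseteq> G'" "finite W" "a \<in> W" "b \<in> W"
  "comp G a \<noteq> comp G b" "comp G' a = comp G' b"
  shows "Phi W G' < Phi W G"
proof -
  let ?f = "lift G'" and ?A = "(\<lambda>x. comp G x) ` W"
  have "\<not> inj_on ?f ?A"
  proof
    assume inj: "inj_on ?f ?A"
    have "?f (comp G a) = comp G' a"
      using comp_img[OF assms(1) assms(3)] unfolding lift_def by simp
    moreover have "?f (comp G b) = comp G' b"
      using comp_img[OF assms(1) assms(4)] unfolding lift_def by simp
    ultimately have "?f (comp G a) = ?f (comp G b)" using assms(6) by simp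
    moreover have "comp G a \<in> ?A" "comp G b \<in> ?A" using assms(3,4) by auto
    ultimately have "comp G a = comp G b" by (rule inj_onD[OF inj])
    then show False using assms(5) by simp
  qed
  then have "card (?f ` ?A) \<noteq> card ?A" using assms(2) by (simp add: inj_on_iff_eq_card)
  moreover have "card (?f ` ?A) \<le> card ?A" using assms(2) by (intro card_image_le) auto
  ultimately show ?thesis unfolding Phi_def Phi_img[OF assms(1)] by simp
qed

lemma Phi_pos: assumes "finite W" "W \<noteq> {}" shows "Phi W G \<ge> 1"
  using assms unfolding Phi_def by (simp add: Suc_le_eq card_gt_0_iff)

lemma Phi_bound:
  assumes edges: "\<forall>e\<in>G. e \<subseteq> {1..n}"
    and W: "W = {x\<in>{1..n}. k \<le> card (comp G x)}"
  shows "Phi W G * k \<le> card W"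
proof -
  let ?C = "(\<lambda>x. comp G x) ` W"
  have sub: "\<And>x. x \<in> W \<Longrightarrow> comp G x \<subseteq> W"
  proof
    fix x y assume x: "x \<in> W" and y: "y \<in> comp G x"
    have "comp G y = comp G x" using comp_eq[OF y] .
    moreover have "y \<in> {1..n}" using comp_sub_n[OF edges] x y W by blast
    ultimately show "y \<in> W" using x W by auto
  qed
  have U: "\<Union>?C = W" using sub comp_self by blast
  have fin: "finite W" using W by simp
  have disj: "pairwise disjnt ?C"
    unfolding pairwise_def disjnt_def
  proof (intro ballI impI)
    fix A B assume "A \<in> ?C" "B \<in> ?C" "A \<noteq> B"
    then obtain x y where "A = comp G x" "B = comp G y" by blast
    then show "A \<inter> B = {}" using comp_eq \<open>A \<noteq> B\<close> by blast
  qed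
  have finC: "\<And>A. A \<in> ?C \<Longrightarrow> finite A" using sub fin finite_subset by blast
  have kC: "\<forall>C\<in>?C. k \<le> card C"
  proof
    fix C assume "C \<in> ?C"
    then obtain x where "x \<in> W" "C = comp G x" by blast
    then show "k \<le> card C" using W by simp
  qed
  have cW: "card W = sum card ?C"
    using card_Union_disjoint[OF disj finC] U by simp
  have "card ?C * k \<le> sum card ?C"
    using sum_bounded_below[of ?C k card] kC by simp
  then show ?thesis unfolding Phi_def cW .
qed

lemma Phi_step:
  assumes "G' = G \<union> E'" "finite W" "E' \<noteq> {}"
    and e: "\<forall>e\<in>E'. \<exists>x y. x \<in> set t \<and> y \<in> set t \<and> x \<noteq> y \<and> e = {x,y}"
    and t: "t \<in> Good l W G"
  shows "Phi W G' < Phi W G"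
proof -
  obtain e where "e \<in> E'" using assms(3) by blast
  then obtain a b where ab: "a \<in> set t" "b \<in> set t" "a \<noteq> b" "e = {a,b}" using e by blast
  have lt: "length t = l" using t unfolding Good_def by simp
  obtain i where i: "i < l" "a = t!i" using ab(1) lt by (metis in_set_conv_nth)
  obtain j where j: "j < l" "b = t!j" using ab(2) lt by (metis in_set_conv_nth)
  note ij = i(1) j(1) i(2) j(2)
  have "i \<noteq> j" using ij ab by auto
  then have nr: "(a,b) \<notin> (adj G)\<^sup>*" using t ij unfolding Good_def by auto
  have W: "a \<in> W" "b \<in> W" using ab t unfolding Good_def by auto
  have "comp G a \<noteq> comp G b"
  proof
    assume "comp G a = comp G b"
    then have "b \<in> comp G a" using comp_self by metis
    then show False using nr by (simp add: comp_def)
  qed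
  moreover have "(a,b) \<in> adj G'" using assms(1) \<open>e \<in> E'\<close> ab by (auto simp: adj_def)
  then have "b \<in> comp G' a" by (simp add: comp_def)
  then have "comp G' a = comp G' b" using comp_eq[of b G' a] by simp
  moreover have "G \<subseteq> G'" using assms(1) by simp
  ultimately show ?thesis using Phi_less[OF _ assms(2) W] by blast
qed

lemma Good_fin: "finite W \<Longrightarrow> finite (Good l W G)"
  by (rule finite_subset[OF _ finite_lists_length_eq[of W l]]) (auto simp: Good_def)

lemma Good_Suc_sup:
  "(\<lambda>(t,x). x # t) ` Sigma (Good l W G) (\<lambda>t. W - (\<Union>y\<in>set t. comp G y)) \<subseteq> Good (Suc l) W G"
proof
  fix s assume "s \<in> (\<lambda>(t,x). x # t) ` Sigma (Good l W G) (\<lambda>t. W - (\<Union>y\<in>set t. comp G y))"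
  then obtain p where p: "p \<in> Sigma (Good l W G) (\<lambda>t. W - (\<Union>y\<in>set t. comp G y))"
    and sp: "s = (\<lambda>(t,x). x # t) p" by (rule imageE)
  obtain t x where ptx: "p = (t,x)" by (cases p)
  have s: "s = x # t" using sp ptx by simp
  have t: "t \<in> Good l W G" using p ptx by simp
  have x: "x \<in> W" "\<forall>y\<in>set t. x \<notin> comp G y" using p ptx by auto
  have lt: "length t = l" and st: "set t \<subseteq> W"
    and pt: "\<forall>i<l. \<forall>j<l. i \<noteq> j \<longrightarrow> (t!i, t!j) \<notin> (adj G)\<^sup>*"
    using t unfolding Good_def by auto
  have "((x#t)!i, (x#t)!j) \<notin> (adj G)\<^sup>*" if ij: "i < Suc l" "j < Suc l" "i \<noteq> j" for i j
  proof (cases i)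
    case 0
    then obtain j' where j': "j = Suc j'" using ij by (cases j) auto
    then have "t!j' \<in> set t" using ij lt by simp
    then have nx: "x \<notin> comp G (t!j')" using x by blast
    show ?thesis
    proof
      assume "((x#t)!i, (x#t)!j) \<in> (adj G)\<^sup>*"
      then have "(x, t!j') \<in> (adj G)\<^sup>*" using 0 j' by simp
      then have "(t!j', x) \<in> (adj G)\<^sup>*" by (rule rtr_sym)
      then show False using nx by (simp add: comp_def)
    qed
  next
    case (Suc i')
    show ?thesis
    proof (cases j)
      case 0
      have "t!i' \<in> set t" using ij lt Suc by simp
      then have "x \<notin> comp G (t!i')" using x by blast
      then show ?thesis using Suc 0 by (simp add: comp_def)
    next
      case (Suc j')
      have "i' < l" "j' < l" "i' \<noteq> j'" using ij \<open>i = Suc i'\<close> Suc by auto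
      then have "(t!i', t!j') \<notin> (adj G)\<^sup>*" using pt by blast
      then show ?thesis using \<open>i = Suc i'\<close> Suc by simp
    qed
  qed
  then have P: "\<forall>i<Suc l. \<forall>j<Suc l. i \<noteq> j \<longrightarrow> ((x#t)!i, (x#t)!j) \<notin> (adj G)\<^sup>*" by blast
  have "length (x#t) = Suc l" "set (x#t) \<subseteq> W" using lt st x by auto
  with P show "s \<in> Good (Suc l) W G" unfolding Good_def s by blast
qed

lemma card_rest:
  assumes "finite W" and cw: "\<forall>y\<in>W. finite (comp G y) \<and> card (comp G y) \<le> c"
    and "set t \<subseteq> W" "length t = l"
  shows "card W - l * c \<le> card (W - (\<Union>y\<in>set t. comp G y))"
proof -
  let ?X = "\<Union>y\<in>set t. comp G y"
  have fX: "finite ?X" using cw assms(3) by auto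
  have "card ?X \<le> (\<Sum>y\<in>set t. card (comp G y))" by (rule card_UN_le) simp
  also have "\<dots> \<le> (\<Sum>y\<in>set t. c)" using cw assms(3) by (intro sum_mono) auto
  also have "\<dots> = card (set t) * c" by simp
  also have "\<dots> \<le> l * c" using card_length[of t] assms(4) by simp
  finally have "card ?X \<le> l * c" .
  moreover have "card W - card ?X \<le> card (W - ?X)" using fX by (rule diff_card_le_card_Diff)
  ultimately show ?thesis by linarith
qed

lemma count_ge:
  assumes "finite W" and cw: "\<forall>y\<in>W. finite (comp G y) \<and> card (comp G y) \<le> c"
  shows "l * c \<le> card W \<Longrightarrow> (\<Prod>i<l. real (card W) - real i * real c) \<le> real (card (Good l W G))"
proof (induction l)
  case 0
  have "Good 0 W G = {[]}" unfolding Good_def by auto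
  then show ?case by simp
next
  case (Suc l)
  let ?B = "\<lambda>t. W - (\<Union>y\<in>set t. comp G y)"
  have lc: "l * c \<le> card W" using Suc.prems by simp
  have IH: "(\<Prod>i<l. real (card W) - real i * real c) \<le> real (card (Good l W G))"
    using Suc.IH[OF lc] .
  have fG: "finite (Good l W G)" using Good_fin[OF assms(1)] .
  have inj: "inj_on (\<lambda>(t,x). x # t) (Sigma (Good l W G) ?B)" by (auto simp: inj_on_def)
  have "card (Good (Suc l) W G) \<ge> card ((\<lambda>(t,x). x # t) ` Sigma (Good l W G) ?B)"
    by (rule card_mono[OF Good_fin[OF assms(1)] Good_Suc_sup])
  also have "card ((\<lambda>(t,x). x # t) ` Sigma (Good l W G) ?B) = card (Sigma (Good l W G) ?B)"
    by (rule card_image[OF inj])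
  also have "\<dots> = (\<Sum>t\<in>Good l W G. card (?B t))"
    by (rule card_SigmaI) (use fG assms(1) in auto)
  finally have A: "(\<Sum>t\<in>Good l W G. card (?B t)) \<le> card (Good (Suc l) W G)" .
  have "\<forall>t\<in>Good l W G. card W - l * c \<le> card (?B t)"
    using card_rest[OF assms(1) cw] unfolding Good_def by auto
  then have "card (Good l W G) * (card W - l * c) \<le> (\<Sum>t\<in>Good l W G. card (?B t))"
    using sum_bounded_below[of "Good l W G" "card W - l * c" "\<lambda>t. card (?B t)"] by simp
  with A have B: "card (Good l W G) * (card W - l * c) \<le> card (Good (Suc l) W G)" by linarith
  have rr: "real (card W - l * c) = real (card W) - real l * real c" using lc by (simp add: of_nat_diff)
  have "(\<Prod>i<Suc l. real (card W) - real i * real c)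
      = (\<Prod>i<l. real (card W) - real i * real c) * (real (card W) - real l * real c)" by simp
  also have "\<dots> \<le> real (card (Good l W G)) * (real (card W) - real l * real c)"
    by (rule mult_right_mono[OF IH]) (use rr in simp)
  also have "\<dots> = real (card (Good l W G) * (card W - l * c))" using rr by simp
  also have "\<dots> \<le> real (card (Good (Suc l) W G))" using B by (simp only: of_nat_le_iff)
  finally show ?case .
qed

lemma weier: "finite A \<Longrightarrow> (\<forall>i\<in>A. 0 \<le> a i \<and> a i \<le> (1::real)) \<Longrightarrow> 1 - sum a A \<le> (\<Prod>i\<in>A. 1 - a i)"
proof (induction A rule: finite_induct)
  case empty then show ?case by simp
next
  case (insert x F)

  have IH: "1 - sum a F \<le> (\<Prod>i\<in>F. 1 - a i)" using insert.IH insert.prems by simp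
  have ax: "0 \<le> a x" "a x \<le> 1" using insert.prems by auto
  have "1 - sum a (insert x F) = (1 - sum a F) - a x" using insert.hyps by simp
  also have "\<dots> \<le> (\<Prod>i\<in>F. 1 - a i) - a x" using IH by simp
  also have "\<dots> \<le> (1 - a x) * (\<Prod>i\<in>F. 1 - a i)"
  proof -
    have "(\<Prod>i\<in>F. 1 - a i) \<le> 1" using insert.prems by (intro prod_le_1) auto
    then have "a x * (\<Prod>i\<in>F. 1 - a i) \<le> a x" using ax by (simp add: mult_left_le)
    then show ?thesis by (simp add: algebra_simps)
  qed
  also have "\<dots> = (\<Prod>i\<in>insert x F. 1 - a i)" using insert by simp
  finally show ?case .
qed

lemma gauss2: "2 * (\<Sum>i<l. real i) = real l * (real l - 1)"
  by (induction l) (simp_all add: algebra_simps)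

lemma prod_half:
  fixes w c :: real and l :: nat
  assumes "w > 0" "c \<ge> 0" "c * real l ^ 2 \<le> w"
  shows "w ^ l / 2 \<le> (\<Prod>i<l. w - real i * c)"
proof -
  let ?a = "\<lambda>i. real i * c / w"
  have le: "\<forall>i\<in>{..<l}. 0 \<le> ?a i \<and> ?a i \<le> 1"
  proof
    fix i assume "i \<in> {..<l}"
    then have "i \<le> l * l" by (metis lessThan_iff less_imp_le_nat le_trans le_square)
    then have "real i \<le> real l ^ 2" by (simp add: power2_eq_square flip: of_nat_mult)
    then have "real i * c \<le> real l ^ 2 * c" using assms(2) by (rule mult_right_mono)
    then show "0 \<le> ?a i \<and> ?a i \<le> 1" using assms by (auto simp: field_simps)
  qed
  have s: "sum ?a {..<l} = (\<Sum>i<l. real i) * c / w" by (simp add: sum_divide_distrib sum_distrib_right)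
  have g: "2 * (\<Sum>i<l. real i) = real l * (real l - 1)" by (rule gauss2)
  have "(\<Sum>i<l. real i) * c \<le> w / 2"
  proof -
    have "2 * ((\<Sum>i<l. real i) * c) = real l * (real l - 1) * c" using g by simp
    also have "\<dots> \<le> real l ^ 2 * c" using assms(2) by (intro mult_right_mono) (auto simp: power2_eq_square algebra_simps)
    also have "\<dots> \<le> w" using assms(3) by (simp add: mult.commute)
    finally show ?thesis by simp
  qed
  then have "(\<Sum>i<l. real i) * c / w \<le> (w/2) / w" using assms(1) by (intro divide_right_mono) auto
  then have "sum ?a {..<l} \<le> 1/2" using s assms(1) by simp
  then have "1/2 \<le> (\<Prod>i<l. 1 - ?a i)" using weier[OF _ le] by simp
  then have "w ^ l * (1/2) \<le> w ^ l * (\<Prod>i<l. 1 - ?a i)" using assms(1) by (intro mult_left_mono) auto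
  also have "w ^ l * (\<Prod>i<l. 1 - ?a i) = (\<Prod>i<l. w * (1 - ?a i))" by (simp add: prod.distrib)
  also have "\<dots> = (\<Prod>i<l. w - real i * c)" using assms(1) by (intro prod.cong) (auto simp: field_simps)
  finally show ?thesis by simp
qed

definition TT :: "nat \<Rightarrow> nat \<Rightarrow> nat list set" where
  "TT l n = {t. length t = l \<and> set t \<subseteq> {1..n}}"

definition ES :: "nat \<Rightarrow> nat set set set" where
  "ES n = Pow (Pow {1..n})"

lemma TT_fin: "finite (TT l n)"
  unfolding TT_def using finite_lists_length_eq[of "{1..n}" l] by (simp add: conj_commute)

lemma ES_fin: "finite (ES n)" unfolding ES_def by simp

definition GrH :: "nat \<Rightarrow> (nat \<Rightarrow> nat list \<times> nat set set) \<Rightarrow> nat set set" where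
  "GrH j u = (\<Union>i\<in>{1..j}. snd (u i))"

locale rule =
  fixes M :: "'a measure" and l n :: nat and F :: "nat \<Rightarrow> 'a measure"
    and v :: "nat \<Rightarrow> 'a \<Rightarrow> nat list" and E :: "nat \<Rightarrow> 'a \<Rightarrow> nat set set"
  assumes R: "ell_vertex_rule M l n F v E"
begin

lemma R_1: "prob_space M"
  using R[unfolded ell_vertex_rule_def] by (elim conjE) assumption
lemma R_2: "\<forall>m. subalgebra M (F m)"
  using R[unfolded ell_vertex_rule_def] by (elim conjE) assumption
lemma R_3: "\<forall>m. sets (F m) \<subseteq> sets (F (Suc m))"
  using R[unfolded ell_vertex_rule_def] by (elim conjE) assumption
lemma R_4: "\<forall>m\<ge>1. v m \<in> measurable (F m) (count_space UNIV)"
  using R[unfolded ell_vertex_rule_def] by (elim conjE) assumption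
lemma R_5: "\<forall>m\<ge>1. \<forall>\<omega>\<in>space M. length (v m \<omega>) = l \<and> set (v m \<omega>) \<subseteq> {1..n}"
  using R[unfolded ell_vertex_rule_def] by (elim conjE) assumption
lemma R_6: "\<forall>m\<ge>1. \<forall>t. length t = l \<and> set t \<subseteq> {1..n} \<longrightarrow>
         measure M {\<omega>\<in>space M. v m \<omega> = t} = 1 / real n ^ l"
  using R[unfolded ell_vertex_rule_def] by (elim conjE) assumption
lemma R_7: "\<forall>m\<ge>1. \<forall>A\<in>sets (F (m - 1)). \<forall>t.
         measure M (A \<inter> {\<omega>\<in>space M. v m \<omega> = t})
           = measure M A * measure M {\<omega>\<in>space M. v m \<omega> = t}"
  using R[unfolded ell_vertex_rule_def] by (elim conjE) assumption
lemma R_8: "\<forall>m\<ge>1. E m \<in> measurable (F m) (count_space UNIV)"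
  using R[unfolded ell_vertex_rule_def] by (elim conjE) assumption
lemma R_9: "\<forall>m\<ge>1. \<forall>\<omega>\<in>space M. \<forall>e\<in>E m \<omega>.
         \<exists>x y. x \<in> set (v m \<omega>) \<and> y \<in> set (v m \<omega>) \<and> x \<noteq> y \<and> e = {x, y}"
  using R[unfolded ell_vertex_rule_def] by (elim conjE) assumption
lemma R_10: "\<forall>m\<ge>1. \<forall>\<omega>\<in>space M.
         (\<forall>i<l. \<forall>j<l. i \<noteq> j \<longrightarrow> (v m \<omega> ! i, v m \<omega> ! j) \<notin> (adj (Gr E (m - 1) \<omega>))\<^sup>*)
         \<longrightarrow> E m \<omega> \<noteq> {}"
  using R[unfolded ell_vertex_rule_def] by (elim conjE) assumption

lemma ps: "prob_space M" by (rule R_1)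

sublocale prob_space M by (rule ps)

lemma spF: "space (F m) = space M" using R_2 unfolding subalgebra_def by blast
lemma setsF: "sets (F m) \<subseteq> sets M" using R_2 unfolding subalgebra_def by blast
lemma chain: "i \<le> j \<Longrightarrow> sets (F i) \<subseteq> sets (F j)"
proof -
  have "\<forall>m. sets (F m) \<subseteq> sets (F (Suc m))" by (rule R_3)
  then show "i \<le> j \<Longrightarrow> sets (F i) \<subseteq> sets (F j)"
    by (induction j) (auto simp: le_Suc_eq)
qed
lemma vmeas: "m \<ge> 1 \<Longrightarrow> v m \<in> measurable (F m) (count_space UNIV)"
  using R_4 by blast
lemma Emeas: "m \<ge> 1 \<Longrightarrow> E m \<in> measurable (F m) (count_space UNIV)"
  using R_8 by blast
lemma vval: "m \<ge> 1 \<Longrightarrow> \<omega> \<in> space M \<Longrightarrow> length (v m \<omega>) = l \<and> set (v m \<omega>) \<subseteq> {1..n}"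
  using R_5 by blast
lemma vTT: "m \<ge> 1 \<Longrightarrow> \<omega> \<in> space M \<Longrightarrow> v m \<omega> \<in> TT l n"
  using vval unfolding TT_def by blast
lemma vprob: "m \<ge> 1 \<Longrightarrow> t \<in> TT l n \<Longrightarrow> measure M {\<omega>\<in>space M. v m \<omega> = t} = 1 / real n ^ l"
  using R_6 unfolding TT_def by blast
lemma indep: "m \<ge> 1 \<Longrightarrow> A \<in> sets (F (m - 1)) \<Longrightarrow>
   measure M (A \<inter> {\<omega>\<in>space M. v m \<omega> = t}) = measure M A * measure M {\<omega>\<in>space M. v m \<omega> = t}"
  using R_7 by blast
lemma Eedge: "m \<ge> 1 \<Longrightarrow> \<omega> \<in> space M \<Longrightarrow> e \<in> E m \<omega> \<Longrightarrow>
   \<exists>x y. x \<in> set (v m \<omega>) \<and> y \<in> set (v m \<omega>) \<and> x \<noteq> y \<and> e = {x, y}"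
  using R_9 by blast
lemma Enonempty: "m \<ge> 1 \<Longrightarrow> \<omega> \<in> space M \<Longrightarrow>
   (\<forall>i<l. \<forall>j<l. i \<noteq> j \<longrightarrow> (v m \<omega> ! i, v m \<omega> ! j) \<notin> (adj (Gr E (m - 1) \<omega>))\<^sup>*) \<Longrightarrow> E m \<omega> \<noteq> {}"
  using R_10 by blast

lemma Eval: assumes "m \<ge> 1" "\<omega> \<in> space M" shows "E m \<omega> \<in> ES n"
proof -
  have "\<forall>e\<in>E m \<omega>. e \<subseteq> {1..n}"
  proof
    fix e assume "e \<in> E m \<omega>"
    then obtain x y where "x \<in> set (v m \<omega>)" "y \<in> set (v m \<omega>)" "e = {x,y}" using Eedge assms by blast
    then show "e \<subseteq> {1..n}" using vval[OF assms] by auto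
  qed
  then show ?thesis unfolding ES_def by auto
qed

lemma Gr_edges: "\<omega> \<in> space M \<Longrightarrow> \<forall>e\<in>Gr E j \<omega>. e \<subseteq> {1..n}"
  using Eval unfolding Gr_def ES_def by fastforce

lemma Gr_Suc: "Gr E (Suc j) \<omega> = Gr E j \<omega> \<union> E (Suc j) \<omega>"
  unfolding Gr_def using atLeastAtMostSuc_conv[of 1 j] by (simp add: Un_commute)

lemma Gr_mono: "i \<le> j \<Longrightarrow> Gr E i \<omega> \<subseteq> Gr E j \<omega>"
  unfolding Gr_def by (rule UN_mono) auto

definition H :: "nat \<Rightarrow> 'a \<Rightarrow> (nat \<Rightarrow> nat list \<times> nat set set)" where
  "H K \<omega> = restrict (\<lambda>i. (v i \<omega>, E i \<omega>)) {1..K}"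

definition U :: "nat \<Rightarrow> (nat \<Rightarrow> nat list \<times> nat set set) set" where
  "U K = PiE {1..K} (\<lambda>_. TT l n \<times> ES n)"

lemma U_fin: "finite (U K)"
  unfolding U_def by (intro finite_PiE) (auto intro: TT_fin ES_fin)

lemma H_U: "\<omega> \<in> space M \<Longrightarrow> H K \<omega> \<in> U K"
  unfolding H_def U_def using vTT Eval by auto

lemma sets_le: "i \<le> K \<Longrightarrow> f \<in> measurable (F i) (count_space UNIV) \<Longrightarrow>
   {\<omega>\<in>space M. f \<omega> = a} \<in> sets (F K)"
proof -
  assume "i \<le> K" "f \<in> measurable (F i) (count_space UNIV)"
  then have "f -` {a} \<inter> space (F i) \<in> sets (F i)" by (intro measurable_sets) auto
  then have "{\<omega>\<in>space M. f \<omega> = a} \<in> sets (F i)" using spF[of i] by (simp add: vimage_def Int_def conj_commute)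
  then show ?thesis using chain \<open>i \<le> K\<close> by blast
qed

lemma H_eq_iff: assumes "u \<in> U K"
  shows "H K \<omega> = u \<longleftrightarrow> (\<forall>i\<in>{1..K}. v i \<omega> = fst (u i) \<and> E i \<omega> = snd (u i))"
proof
  assume "H K \<omega> = u"
  then have "\<forall>i\<in>{1..K}. u i = (v i \<omega>, E i \<omega>)" unfolding H_def by auto
  then show "\<forall>i\<in>{1..K}. v i \<omega> = fst (u i) \<and> E i \<omega> = snd (u i)" by simp
next
  assume a: "\<forall>i\<in>{1..K}. v i \<omega> = fst (u i) \<and> E i \<omega> = snd (u i)"
  have ext: "u \<in> extensional {1..K}" using assms unfolding U_def by (simp add: PiE_def)
  show "H K \<omega> = u"
  proof
    fix i show "H K \<omega> i = u i"
    proof (cases "i \<in> {1..K}")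
      case True then show ?thesis using a unfolding H_def by (simp add: prod_eq_iff)
    next
      case False
      then have "u i = undefined" using ext unfolding extensional_def by blast
      moreover have "H K \<omega> i = undefined" unfolding H_def restrict_def by (rule if_not_P[OF False])
      ultimately show ?thesis by simp
    qed
  qed
qed

lemma H_pre: "u \<in> U K \<Longrightarrow> {\<omega>\<in>space M. H K \<omega> = u} =
   space M \<inter> (\<Inter>i\<in>{1..K}. {\<omega>\<in>space M. v i \<omega> = fst (u i)} \<inter> {\<omega>\<in>space M. E i \<omega> = snd (u i)})"
proof -
  assume u: "u \<in> U K"
  show ?thesis
  proof (intro equalityI subsetI)
    fix \<omega> assume "\<omega> \<in> {\<omega>\<in>space M. H K \<omega> = u}"
    then show "\<omega> \<in> space M \<inter> (\<Inter>i\<in>{1..K}. {\<omega>\<in>space M. v i \<omega> = fst (u i)} \<inter> {\<omega>\<in>space M. E i \<omega> = snd (u i)})"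
      using H_eq_iff[OF u, of \<omega>] by simp
  next
    fix \<omega> assume "\<omega> \<in> space M \<inter> (\<Inter>i\<in>{1..K}. {\<omega>\<in>space M. v i \<omega> = fst (u i)} \<inter> {\<omega>\<in>space M. E i \<omega> = snd (u i)})"
    then show "\<omega> \<in> {\<omega>\<in>space M. H K \<omega> = u}"
      using H_eq_iff[OF u, of \<omega>] by simp
  qed
qed

lemma H_pre_sets: "u \<in> U K \<Longrightarrow> {\<omega>\<in>space M. H K \<omega> = u} \<in> sets (F K)"
proof -
  assume u: "u \<in> U K"
  have "{\<omega>\<in>space M. v i \<omega> = fst (u i)} \<inter> {\<omega>\<in>space M. E i \<omega> = snd (u i)} \<in> sets (F K)"
    if i: "i \<in> {1..K}" for i
  proof -
    have "i \<ge> 1" "i \<le> K" using i by auto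
    then show ?thesis using sets_le[OF \<open>i \<le> K\<close> vmeas[OF \<open>i \<ge> 1\<close>]] sets_le[OF \<open>i \<le> K\<close> Emeas[OF \<open>i \<ge> 1\<close>]]
      by (intro sets.Int)
  qed
  note hi = this
  have "space M \<in> sets (F K)" using sets.top[of "F K"] spF by simp
  show ?thesis
  proof (cases "K = 0")
    case True
    then show ?thesis unfolding H_pre[OF u] using \<open>space M \<in> sets (F K)\<close> by simp
  next
    case False
    have "(\<Inter>i\<in>{1..K}. {\<omega>\<in>space M. v i \<omega> = fst (u i)} \<inter> {\<omega>\<in>space M. E i \<omega> = snd (u i)}) \<in> sets (F K)"
      by (rule sets.finite_INT) (use False hi in auto)
    then show ?thesis unfolding H_pre[OF u] using \<open>space M \<in> sets (F K)\<close> by (rule sets.Int[rotated])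
  qed
qed

lemma H_meas: "H K \<in> measurable (F K) (count_space (U K))"
proof -
  have "\<forall>a\<in>U K. H K -` {a} \<inter> space (F K) \<in> sets (F K)"
    using H_pre_sets spF by (simp add: vimage_def Int_def conj_commute)
  moreover have "H K \<in> space (F K) \<rightarrow> U K" using H_U spF by auto
  ultimately show ?thesis using measurable_count_space_eq2[OF U_fin] by blast
qed

lemma fH_meas: assumes "\<forall>\<omega>\<in>space M. f \<omega> = \<psi> (H K \<omega>)"
  shows "f \<in> measurable (F K) (count_space UNIV)" "f \<in> borel_measurable (F K)"
proof -
  have a: "(\<lambda>\<omega>. \<psi> (H K \<omega>)) \<in> measurable (F K) (count_space UNIV)"
    by (rule measurable_compose[OF H_meas measurable_count_space])
  have b: "(\<lambda>\<omega>. \<psi> (H K \<omega>)) \<in> measurable (F K) borel"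
    by (rule measurable_compose[OF H_meas borel_measurable_count_space])
  show "f \<in> measurable (F K) (count_space UNIV)" using a assms spF measurable_cong[of "F K" f] by metis
  show "f \<in> borel_measurable (F K)" using b assms spF measurable_cong[of "F K" f] by metis
qed

lemma subalg_meas: "f \<in> measurable (F K) N \<Longrightarrow> f \<in> measurable M N"
proof -
  assume f: "f \<in> measurable (F K) N"
  show "f \<in> measurable M N"
  proof (rule measurableI)
    fix x assume "x \<in> space M" then show "f x \<in> space N" using measurable_space[OF f] spF by auto
  next
    fix A assume "A \<in> sets N"
    then have "f -` A \<inter> space (F K) \<in> sets (F K)" using f by (rule measurable_sets[rotated])
    then show "f -` A \<inter> space M \<in> sets M" using spF setsF by auto
  qed
qed

lemma fH_set: assumes "\<forall>\<omega>\<in>space M. P \<omega> = \<psi> (H K \<omega>)"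
  shows "{\<omega>\<in>space M. P \<omega>} \<in> sets (F K)" "{\<omega>\<in>space M. P \<omega>} \<in> sets M"
proof -
  have m: "P \<in> measurable (F K) (count_space UNIV)" using fH_meas(1)[OF assms] .
  have "P -` {True} \<inter> space (F K) \<in> sets (F K)" by (rule measurable_sets[OF m]) simp
  then show "{\<omega>\<in>space M. P \<omega>} \<in> sets (F K)" using spF by (simp add: vimage_def Int_def conj_commute)
  then show "{\<omega>\<in>space M. P \<omega>} \<in> sets M" using setsF by blast
qed

lemma fH_int: assumes "\<forall>\<omega>\<in>space M. f \<omega> = \<psi> (H K \<omega>)"
  shows "integrable M (f :: 'a \<Rightarrow> real)"
proof -
  have bm: "f \<in> borel_measurable M" using subalg_meas fH_meas(2)[OF assms] by blast
  let ?B = "Max ((\<lambda>u. \<bar>\<psi> u\<bar>) ` U K)"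
  have "\<forall>\<omega>\<in>space M. norm (f \<omega>) \<le> ?B"
    using assms H_U U_fin by (auto intro!: Max_ge)
  then show ?thesis using bm by (intro integrable_const_bound[where B="?B"]) auto
qed

end

context rule begin

abbreviation AU :: "nat \<Rightarrow> (nat \<Rightarrow> nat list \<times> nat set set) \<Rightarrow> 'a set" where
  "AU K u \<equiv> {\<omega>\<in>space M. H K \<omega> = u}"

lemma AU_sets: "u \<in> U K \<Longrightarrow> AU K u \<in> sets M"
  using H_pre_sets setsF by blast

lemma int_H_ind:
  assumes f: "\<forall>\<omega>\<in>space M. f \<omega> = \<psi> (H K \<omega>)" and B: "B \<in> sets M"
  shows "(\<integral>\<omega>. f \<omega> * indicator B \<omega> \<partial>M) = (\<Sum>u\<in>U K. \<psi> u * measure M (AU K u \<inter> B))"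
proof -
  have eq: "f \<omega> * indicator B \<omega> = (\<Sum>u\<in>U K. \<psi> u * indicator (AU K u \<inter> B) \<omega>)"
    if w: "\<omega> \<in> space M" for \<omega>
  proof -
    have "(\<Sum>u\<in>U K. \<psi> u * indicator (AU K u \<inter> B) \<omega>)
        = (\<Sum>u\<in>U K. if u = H K \<omega> then \<psi> u * indicator B \<omega> else 0)"
      using w by (intro sum.cong) (auto simp: indicator_def)
    also have "\<dots> = \<psi> (H K \<omega>) * indicator B \<omega>" using H_U[OF w] U_fin by simp
    finally show ?thesis using f w by simp
  qed
  have int: "\<And>u. u \<in> U K \<Longrightarrow> integrable M (\<lambda>\<omega>. \<psi> u * indicator (AU K u \<inter> B) \<omega>)"
  proof -
    fix u assume "u \<in> U K"
    then have "AU K u \<inter> B \<in> sets M" using AU_sets B by auto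
    moreover have "emeasure M (AU K u \<inter> B) < \<infinity>" using emeasure_finite by (simp add: less_top[symmetric])
    ultimately show "integrable M (\<lambda>\<omega>. \<psi> u * indicator (AU K u \<inter> B) \<omega>)"
      by (intro integrable_mult_right integrable_real_indicator)
  qed
  have "(\<integral>\<omega>. f \<omega> * indicator B \<omega> \<partial>M) = (\<integral>\<omega>. (\<Sum>u\<in>U K. \<psi> u * indicator (AU K u \<inter> B) \<omega>) \<partial>M)"
    by (rule Bochner_Integration.integral_cong[OF refl eq])
  also have "\<dots> = (\<Sum>u\<in>U K. (\<integral>\<omega>. \<psi> u * indicator (AU K u \<inter> B) \<omega> \<partial>M))"
    by (rule Bochner_Integration.integral_sum[OF int])
  also have "\<dots> = (\<Sum>u\<in>U K. \<psi> u * measure M (AU K u \<inter> B))"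
  proof (intro sum.cong refl)
    fix u assume "u \<in> U K"
    have "(\<integral>\<omega>. \<psi> u * indicator (AU K u \<inter> B) \<omega> \<partial>M) = \<psi> u * (\<integral>\<omega>. indicator (AU K u \<inter> B) \<omega> \<partial>M)"
      by simp
    also have "\<dots> = \<psi> u * measure M (AU K u \<inter> B)"
    proof -
      have "AU K u \<inter> B \<inter> space M = AU K u \<inter> B" by auto
      then show ?thesis by simp
    qed
    finally show "(\<integral>\<omega>. \<psi> u * indicator (AU K u \<inter> B) \<omega> \<partial>M) = \<psi> u * measure M (AU K u \<inter> B)" .
  qed
  finally show ?thesis .
qed

lemma int_H:
  assumes f: "\<forall>\<omega>\<in>space M. f \<omega> = \<psi> (H K \<omega>)"
  shows "(\<integral>\<omega>. f \<omega> \<partial>M) = (\<Sum>u\<in>U K. \<psi> u * measure M (AU K u))"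
proof -
  have "(\<integral>\<omega>. f \<omega> \<partial>M) = (\<integral>\<omega>. f \<omega> * indicator (space M) \<omega> \<partial>M)"
    by (rule Bochner_Integration.integral_cong[OF refl]) simp
  also have "\<dots> = (\<Sum>u\<in>U K. \<psi> u * measure M (AU K u \<inter> space M))"
    by (rule int_H_ind[OF f]) simp
  also have "\<dots> = (\<Sum>u\<in>U K. \<psi> u * measure M (AU K u))"
    by (intro sum.cong refl) (simp add: Int_absorb2)
  finally show ?thesis .
qed

lemma vset_sets: "{\<omega>\<in>space M. v (Suc K) \<omega> = t} \<in> sets M"
  using sets_le[OF order.refl vmeas[of "Suc K"]] setsF by auto

lemma IND:
  assumes f: "\<forall>\<omega>\<in>space M. f \<omega> = \<psi> (H K \<omega>)"
  shows "(\<integral>\<omega>. f \<omega> * indicator {\<omega>\<in>space M. v (Suc K) \<omega> = t} \<omega> \<partial>M)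
       = (\<integral>\<omega>. f \<omega> \<partial>M) * measure M {\<omega>\<in>space M. v (Suc K) \<omega> = t}"
proof -
  let ?B = "{\<omega>\<in>space M. v (Suc K) \<omega> = t}"
  have "(\<integral>\<omega>. f \<omega> * indicator ?B \<omega> \<partial>M) = (\<Sum>u\<in>U K. \<psi> u * measure M (AU K u \<inter> ?B))"
    by (rule int_H_ind[OF f vset_sets])
  also have "\<dots> = (\<Sum>u\<in>U K. \<psi> u * measure M (AU K u) * measure M ?B)"
  proof (intro sum.cong refl)
    fix u assume u: "u \<in> U K"
    have "AU K u \<in> sets (F (Suc K - 1))" using H_pre_sets[OF u] by simp
    then have "measure M (AU K u \<inter> ?B) = measure M (AU K u) * measure M ?B"
      using indep[of "Suc K" "AU K u" t] by simp
    then show "\<psi> u * measure M (AU K u \<inter> ?B) = \<psi> u * measure M (AU K u) * measure M ?B" by simp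
  qed
  also have "\<dots> = (\<Sum>u\<in>U K. \<psi> u * measure M (AU K u)) * measure M ?B"
    by (simp add: sum_distrib_right)
  also have "\<dots> = (\<integral>\<omega>. f \<omega> \<partial>M) * measure M ?B" using int_H[OF f] by simp
  finally show ?thesis .
qed

lemma IND_gd:
  assumes f: "\<forall>\<omega>\<in>space M. f \<omega> = \<psi> (H K \<omega>)"
    and g: "\<forall>\<omega>\<in>space M. Gd \<omega> = \<gamma> (H K \<omega>)"
  shows "(\<integral>\<omega>. f \<omega> * indicator {\<omega>\<in>space M. v (Suc K) \<omega> \<in> Gd \<omega>} \<omega> \<partial>M)
       = (\<integral>\<omega>. f \<omega> * real (card (TT l n \<inter> Gd \<omega>)) / real n ^ l \<partial>M)"
proof -
  let ?B = "\<lambda>t. {\<omega>\<in>space M. v (Suc K) \<omega> = t}"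
  let ?h = "\<lambda>t \<omega>. f \<omega> * of_bool (t \<in> Gd \<omega>)"
  have hrep: "\<forall>\<omega>\<in>space M. ?h t \<omega> = (\<lambda>u. \<psi> u * of_bool (t \<in> \<gamma> u)) (H K \<omega>)" for t
    using f g by simp
  have eq: "f \<omega> * indicator {\<omega>\<in>space M. v (Suc K) \<omega> \<in> Gd \<omega>} \<omega>
      = (\<Sum>t\<in>TT l n. ?h t \<omega> * indicator (?B t) \<omega>)" if w: "\<omega> \<in> space M" for \<omega>
  proof -
    have "(\<Sum>t\<in>TT l n. ?h t \<omega> * indicator (?B t) \<omega>)
        = (\<Sum>t\<in>TT l n. if t = v (Suc K) \<omega> then ?h t \<omega> else 0)"
      using w by (intro sum.cong) (auto simp: indicator_def)
    also have "\<dots> = ?h (v (Suc K) \<omega>) \<omega>" using vTT[of "Suc K" \<omega>] w TT_fin by simp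
    finally show ?thesis using w by (simp add: indicator_def)
  qed
  have inth: "integrable M (?h t)" for t by (rule fH_int[OF hrep])
  have "(\<integral>\<omega>. f \<omega> * indicator {\<omega>\<in>space M. v (Suc K) \<omega> \<in> Gd \<omega>} \<omega> \<partial>M)
      = (\<integral>\<omega>. (\<Sum>t\<in>TT l n. ?h t \<omega> * indicator (?B t) \<omega>) \<partial>M)"
    by (rule Bochner_Integration.integral_cong[OF refl eq])
  also have "\<dots> = (\<Sum>t\<in>TT l n. (\<integral>\<omega>. ?h t \<omega> * indicator (?B t) \<omega> \<partial>M))"
    by (rule Bochner_Integration.integral_sum) (intro integrable_real_mult_indicator vset_sets inth)
  also have "\<dots> = (\<Sum>t\<in>TT l n. (\<integral>\<omega>. ?h t \<omega> \<partial>M) * (1 / real n ^ l))"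
  proof (intro sum.cong refl)
    fix t assume t: "t \<in> TT l n"
    show "(\<integral>\<omega>. ?h t \<omega> * indicator (?B t) \<omega> \<partial>M) = (\<integral>\<omega>. ?h t \<omega> \<partial>M) * (1 / real n ^ l)"
      using IND[OF hrep, of t] vprob[of "Suc K" t] t by simp
  qed
  also have "\<dots> = (\<integral>\<omega>. (\<Sum>t\<in>TT l n. ?h t \<omega> * (1 / real n ^ l)) \<partial>M)"
    by (subst Bochner_Integration.integral_sum) (auto intro: inth simp: sum_distrib_right)
  also have "\<dots> = (\<integral>\<omega>. f \<omega> * real (card (TT l n \<inter> Gd \<omega>)) / real n ^ l \<partial>M)"
  proof (intro Bochner_Integration.integral_cong refl)
    fix \<omega> assume "\<omega> \<in> space M"
    have "(\<Sum>t\<in>TT l n. ?h t \<omega> * (1 / real n ^ l)) = f \<omega> * (\<Sum>t\<in>TT l n. of_bool (t \<in> Gd \<omega>)) / real n ^ l"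
      by (simp add: sum_distrib_left sum_divide_distrib)
    also have "\<dots> = f \<omega> * real (card (TT l n \<inter> Gd \<omega>)) / real n ^ l"
      using TT_fin by (simp add: Collect_mem_eq)
    finally show "(\<Sum>t\<in>TT l n. ?h t \<omega> * (1 / real n ^ l)) = f \<omega> * real (card (TT l n \<inter> Gd \<omega>)) / real n ^ l" .
  qed
  finally show ?thesis .
qed

end

definition Wf :: "nat \<Rightarrow> nat \<Rightarrow> nat \<Rightarrow> (nat \<Rightarrow> nat set set) \<Rightarrow> nat set" where
  "Wf n m k gr = {x\<in>{1..n}. k \<le> card (comp (gr m) x)}"

definition Xf :: "nat \<Rightarrow> nat \<Rightarrow> nat \<Rightarrow> nat \<Rightarrow> (nat \<Rightarrow> nat set set) \<Rightarrow> (nat \<Rightarrow> nat list) \<Rightarrow> nat \<Rightarrow> bool" where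
  "Xf l n m k gr vv j = (vv (m + Suc j) \<in> Good l (Wf n m k gr) (gr (m + j)))"

definition Sf :: "nat \<Rightarrow> nat \<Rightarrow> nat \<Rightarrow> nat \<Rightarrow> (nat \<Rightarrow> nat set set) \<Rightarrow> (nat \<Rightarrow> nat list) \<Rightarrow> nat \<Rightarrow> nat" where
  "Sf l n m k gr vv j = card {i. i < j \<and> Xf l n m k gr vv i}"

definition Rf :: "nat \<Rightarrow> nat \<Rightarrow> real \<Rightarrow> nat \<Rightarrow> (nat \<Rightarrow> nat set set) \<Rightarrow> nat \<Rightarrow> bool" where
  "Rf l n \<alpha> m gr j = (real (L1 n (gr (m + j))) \<le> \<alpha> / real l ^ 2 * real n)"

definition If :: "nat \<Rightarrow> real \<Rightarrow> nat \<Rightarrow> nat \<Rightarrow> (nat \<Rightarrow> nat set set) \<Rightarrow> bool" where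
  "If n \<alpha> m k gr = (\<alpha> * real n \<le> real (card (Wf n m k gr)))"

definition pf :: "nat \<Rightarrow> nat \<Rightarrow> nat \<Rightarrow> nat \<Rightarrow> (nat \<Rightarrow> nat set set) \<Rightarrow> real" where
  "pf l n m k gr = (real (card (Wf n m k gr)) / real n) ^ l / 2"

definition sf :: "nat \<Rightarrow> nat \<Rightarrow> nat \<Rightarrow> (nat \<Rightarrow> nat set set) \<Rightarrow> real" where
  "sf n m k gr = real (card (Wf n m k gr)) / real k"

definition Yf :: "nat \<Rightarrow> nat \<Rightarrow> real \<Rightarrow> nat \<Rightarrow> nat \<Rightarrow> nat \<Rightarrow> (nat \<Rightarrow> nat set set) \<Rightarrow> (nat \<Rightarrow> nat list) \<Rightarrow> nat \<Rightarrow> real" where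
  "Yf l n \<alpha> m k D gr vv j = (if If n \<alpha> m k gr \<and> Rf l n \<alpha> m gr j
     then 2 powr (sf n m k gr - real (Sf l n m k gr vv j)) * (1 - pf l n m k gr / 2) ^ (D - j) else 0)"

definition gf :: "nat \<Rightarrow> nat \<Rightarrow> real \<Rightarrow> nat \<Rightarrow> nat \<Rightarrow> nat \<Rightarrow> (nat \<Rightarrow> nat set set) \<Rightarrow> (nat \<Rightarrow> nat list) \<Rightarrow> nat \<Rightarrow> real" where
  "gf l n \<alpha> m k D gr vv j = (if If n \<alpha> m k gr \<and> Rf l n \<alpha> m gr j
     then 2 powr (sf n m k gr - real (Sf l n m k gr vv j)) * (1 - pf l n m k gr / 2) ^ (D - Suc j) else 0)"

lemma Sf_Suc: "Sf l n m k gr vv (Suc j) = Sf l n m k gr vv j + (if Xf l n m k gr vv j then 1 else 0)"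
proof -
  have fin: "finite {i. i < j \<and> Xf l n m k gr vv i}" by simp
  show ?thesis
  proof (cases "Xf l n m k gr vv j")
    case True
    have "{i. i < Suc j \<and> Xf l n m k gr vv i} = insert j {i. i < j \<and> Xf l n m k gr vv i}"
      using True by (auto simp: less_Suc_eq)
    then show ?thesis unfolding Sf_def using True fin by simp
  next
    case False
    have "{i. i < Suc j \<and> Xf l n m k gr vv i} = {i. i < j \<and> Xf l n m k gr vv i}"
      using False by (auto simp: less_Suc_eq)
    then show ?thesis unfolding Sf_def using False by simp
  qed
qed

locale agree =
  fixes K :: nat and gr gr' :: "nat \<Rightarrow> nat set set" and vv vv' :: "nat \<Rightarrow> nat list"
  assumes ag: "\<And>i. i \<le> K \<Longrightarrow> gr i = gr' i"
    and av: "\<And>i. 1 \<le> i \<Longrightarrow> i \<le> K \<Longrightarrow> vv i = vv' i"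
begin

lemma W_cong: "m \<le> K \<Longrightarrow> Wf n m k gr = Wf n m k gr'"
  unfolding Wf_def using ag by simp

lemma X_cong: "m + Suc j \<le> K \<Longrightarrow> Xf l n m k gr vv j = Xf l n m k gr' vv' j"
  unfolding Xf_def using W_cong[of m n k] ag[of "m+j"] av[of "m + Suc j"] by simp

lemma S_cong: "m + j \<le> K \<Longrightarrow> Sf l n m k gr vv j = Sf l n m k gr' vv' j"
proof -
  assume a: "m + j \<le> K"
  have "{i. i < j \<and> Xf l n m k gr vv i} = {i. i < j \<and> Xf l n m k gr' vv' i}"
  proof (intro Collect_cong conj_cong refl)
    fix i assume "i < j" then show "Xf l n m k gr vv i = Xf l n m k gr' vv' i" using a by (intro X_cong) simp
  qed
  then show ?thesis unfolding Sf_def by simp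
qed

lemma Y_cong: "m + j \<le> K \<Longrightarrow> Yf l n \<alpha> m k D gr vv j = Yf l n \<alpha> m k D gr' vv' j"
  unfolding Yf_def If_def Rf_def pf_def sf_def
  using W_cong[of m n k] S_cong[of m j l n k] ag[of "m+j"] by simp

lemma g_cong: "m + j \<le> K \<Longrightarrow> gf l n \<alpha> m k D gr vv j = gf l n \<alpha> m k D gr' vv' j"
  unfolding gf_def If_def Rf_def pf_def sf_def
  using W_cong[of m n k] S_cong[of m j l n k] ag[of "m+j"] by simp

end

context rule begin

abbreviation grw :: "'a \<Rightarrow> nat \<Rightarrow> nat set set" where "grw \<omega> \<equiv> (\<lambda>i. Gr E i \<omega>)"
abbreviation vvw :: "'a \<Rightarrow> nat \<Rightarrow> nat list" where "vvw \<omega> \<equiv> (\<lambda>i. v i \<omega>)"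

lemma agree_H: "\<omega> \<in> space M \<Longrightarrow> agree K (grw \<omega>) (\<lambda>i. GrH i (H K \<omega>)) (vvw \<omega>) (\<lambda>i. fst (H K \<omega> i))"
proof (unfold_locales)
  fix i assume "i \<le> K"
  then show "Gr E i \<omega> = GrH i (H K \<omega>)" unfolding Gr_def GrH_def H_def by (intro SUP_cong refl) auto
next
  fix i assume "1 \<le> i" "i \<le> K"
  then show "v i \<omega> = fst (H K \<omega> i)" unfolding H_def by simp
qed

lemma Y_rep: "\<forall>\<omega>\<in>space M. Yf l n \<alpha> m k D (grw \<omega>) (vvw \<omega>) j
   = (\<lambda>u. Yf l n \<alpha> m k D (\<lambda>i. GrH i u) (\<lambda>i. fst (u i)) j) (H (m+j) \<omega>)"
  using agree.Y_cong[OF agree_H] by simp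

lemma g_rep: "\<forall>\<omega>\<in>space M. gf l n \<alpha> m k D (grw \<omega>) (vvw \<omega>) j
   = (\<lambda>u. gf l n \<alpha> m k D (\<lambda>i. GrH i u) (\<lambda>i. fst (u i)) j) (H (m+j) \<omega>)"
  using agree.g_cong[OF agree_H] by simp

lemma Gd_rep: "\<forall>\<omega>\<in>space M. Good l (Wf n m k (grw \<omega>)) (Gr E (m+j) \<omega>)
   = (\<lambda>u. Good l (Wf n m k (\<lambda>i. GrH i u)) (GrH (m+j) u)) (H (m+j) \<omega>)"
proof
  fix \<omega> assume w: "\<omega> \<in> space M"
  interpret agree "m+j" "grw \<omega>" "\<lambda>i. GrH i (H (m+j) \<omega>)" "vvw \<omega>" "\<lambda>i. fst (H (m+j) \<omega> i)"
    by (rule agree_H[OF w])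
  show "Good l (Wf n m k (grw \<omega>)) (Gr E (m+j) \<omega>) = (\<lambda>u. Good l (Wf n m k (\<lambda>i. GrH i u)) (GrH (m+j) u)) (H (m+j) \<omega>)"
    using W_cong[of m n k] ag[of "m+j"] by simp
qed

end

context rule begin

lemma W_fin: "finite (Wf n m k gr)" unfolding Wf_def by simp

lemma W_sub: "Wf n m k gr \<subseteq> {1..n}" unfolding Wf_def by auto

lemma Phi_S:
  assumes w: "\<omega> \<in> space M"
  shows "Phi (Wf n m k (grw \<omega>)) (Gr E (m+j) \<omega>) + Sf l n m k (grw \<omega>) (vvw \<omega>) j
         \<le> Phi (Wf n m k (grw \<omega>)) (Gr E m \<omega>)"
proof (induction j)
  case 0 then show ?case by (simp add: Sf_def)
next
  case (Suc j)
  let ?W = "Wf n m k (grw \<omega>)"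
  have GS: "Gr E (m + Suc j) \<omega> = Gr E (m+j) \<omega> \<union> E (m + Suc j) \<omega>"
    using Gr_Suc[of "m+j" \<omega>] by simp
  show ?case
  proof (cases "Xf l n m k (grw \<omega>) (vvw \<omega>) j")
    case True
    let ?t = "v (m + Suc j) \<omega>"
    have t: "?t \<in> Good l ?W (Gr E (m+j) \<omega>)" using True unfolding Xf_def by simp
    have pw: "\<forall>i<l. \<forall>i'<l. i \<noteq> i' \<longrightarrow> (?t ! i, ?t ! i') \<notin> (adj (Gr E (m + Suc j - 1) \<omega>))\<^sup>*"
      using t unfolding Good_def by simp
    have ne: "E (m + Suc j) \<omega> \<noteq> {}" by (rule Enonempty[OF _ w pw]) simp
    have ed: "\<forall>e\<in>E (m + Suc j) \<omega>. \<exists>x y. x \<in> set ?t \<and> y \<in> set ?t \<and> x \<noteq> y \<and> e = {x,y}"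
      using Eedge[OF _ w] by simp
    have "Phi ?W (Gr E (m + Suc j) \<omega>) < Phi ?W (Gr E (m+j) \<omega>)"
      by (rule Phi_step[OF GS W_fin ne ed t])
    then show ?thesis using Suc.IH True by (simp add: Sf_Suc)
  next
    case False
    have "Phi ?W (Gr E (m + Suc j) \<omega>) \<le> Phi ?W (Gr E (m+j) \<omega>)"
      by (rule Phi_mono) (use GS W_fin in auto)
    then show ?thesis using Suc.IH False by (simp add: Sf_Suc)
  qed
qed

lemma fail_Y:
  assumes w: "\<omega> \<in> space M" and n: "n \<ge> 1" and k: "k \<ge> 1" and a: "\<alpha> > 0"
    and f1: "real (Nge n (Gr E m \<omega>) k) \<ge> \<alpha> * real n"
    and f2: "\<not> real (L1 n (Gr E (m + D) \<omega>)) > \<alpha> / real l ^ 2 * real n"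
  shows "Yf l n \<alpha> m k D (grw \<omega>) (vvw \<omega>) D \<ge> 1"
proof -
  let ?W = "Wf n m k (grw \<omega>)"
  have NW: "Nge n (Gr E m \<omega>) k = card ?W" unfolding Nge_def Wf_def by simp
  have I: "If n \<alpha> m k (grw \<omega>)" using f1 NW unfolding If_def by simp
  have Rd: "Rf l n \<alpha> m (grw \<omega>) D" using f2 unfolding Rf_def by simp
  have "\<alpha> * real n > 0" using a n by simp
  then have "real (card ?W) > 0" using f1 NW by linarith
  then have "card ?W > 0" by simp
  then have Wne: "?W \<noteq> {}" by auto
  have P1: "Phi ?W (Gr E (m+D) \<omega>) \<ge> 1" by (rule Phi_pos[OF W_fin Wne])
  have PS: "Phi ?W (Gr E (m+D) \<omega>) + Sf l n m k (grw \<omega>) (vvw \<omega>) D \<le> Phi ?W (Gr E m \<omega>)"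
    by (rule Phi_S[OF w])
  have PB: "Phi ?W (Gr E m \<omega>) * k \<le> card ?W"
    by (rule Phi_bound[OF Gr_edges[OF w]]) (simp add: Wf_def)
  have "Sf l n m k (grw \<omega>) (vvw \<omega>) D < Phi ?W (Gr E m \<omega>)" using P1 PS by linarith
  then have "real (Sf l n m k (grw \<omega>) (vvw \<omega>) D) * real k < real (Phi ?W (Gr E m \<omega>)) * real k"
    using k by (intro mult_strict_right_mono) auto
  also have "\<dots> \<le> real (card ?W)" using of_nat_mono[OF PB] by simp
  finally have "real (Sf l n m k (grw \<omega>) (vvw \<omega>) D) < sf n m k (grw \<omega>)"
    unfolding sf_def using k by (simp add: field_simps)
  then have "1 \<le> 2 powr (sf n m k (grw \<omega>) - real (Sf l n m k (grw \<omega>) (vvw \<omega>) D))"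
    by (intro ge_one_powr_ge_zero) auto
  then show ?thesis unfolding Yf_def using I Rd by simp
qed

end

lemma Wf_card: "card (Wf n m k gr) \<le> n"
proof -
  have "Wf n m k gr \<subseteq> {1..n}" unfolding Wf_def by auto
  then show ?thesis using card_mono[of "{1..n}" "Wf n m k gr"] by simp
qed

lemma pf_le: assumes "n \<ge> 1" shows "pf l n m k gr \<le> 1/2" "0 \<le> pf l n m k gr"
proof -
  have "real (card (Wf n m k gr)) \<le> real n" using Wf_card by simp
  then have "real (card (Wf n m k gr)) / real n \<le> 1" using assms by simp
  then have "(real (card (Wf n m k gr)) / real n) ^ l \<le> 1" by (intro power_le_one) auto
  then show "pf l n m k gr \<le> 1/2" unfolding pf_def by simp
  show "0 \<le> pf l n m k gr" unfolding pf_def by simp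
qed

lemma q_ge: "n \<ge> 1 \<Longrightarrow> 0 \<le> 1 - pf l n m k gr / 2"
  using pf_le(1)[of n l m k gr] by simp

lemma gf_nonneg: "n \<ge> 1 \<Longrightarrow> 0 \<le> gf l n \<alpha> m k D gr vv j"
  unfolding gf_def using q_ge[of n l m k gr] by simp

lemma Yf_nonneg: "n \<ge> 1 \<Longrightarrow> 0 \<le> Yf l n \<alpha> m k D gr vv j"
  unfolding Yf_def using q_ge[of n l m k gr] by simp

context rule begin

lemma step_pt:
  assumes w: "\<omega> \<in> space M" and n: "n \<ge> 1" and j: "j < D"
  shows "Yf l n \<alpha> m k D (grw \<omega>) (vvw \<omega>) (Suc j)
    \<le> gf l n \<alpha> m k D (grw \<omega>) (vvw \<omega>) j * (1 - indicator {\<omega>\<in>space M. Xf l n m k (grw \<omega>) (vvw \<omega>) j} \<omega> / 2)"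
proof (cases "If n \<alpha> m k (grw \<omega>) \<and> Rf l n \<alpha> m (grw \<omega>) (Suc j)")
  case True
  have "L1 n (Gr E (m+j) \<omega>) \<le> L1 n (Gr E (m + Suc j) \<omega>)"
    by (rule L1_mono[OF Gr_mono Gr_edges[OF w] n]) simp
  then have "real (L1 n (Gr E (m+j) \<omega>)) \<le> real (L1 n (Gr E (m + Suc j) \<omega>))" by (simp only: of_nat_le_iff)
  moreover have "real (L1 n (Gr E (m + Suc j) \<omega>)) \<le> \<alpha> / real l ^ 2 * real n" using True unfolding Rf_def by simp
  ultimately have Rj: "Rf l n \<alpha> m (grw \<omega>) j" unfolding Rf_def by linarith
  let ?s = "sf n m k (grw \<omega>)" and ?S = "real (Sf l n m k (grw \<omega>) (vvw \<omega>) j)"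
    and ?q = "(1 - pf l n m k (grw \<omega>) / 2) ^ (D - Suc j)"
  have Y: "Yf l n \<alpha> m k D (grw \<omega>) (vvw \<omega>) (Suc j) = 2 powr (?s - real (Sf l n m k (grw \<omega>) (vvw \<omega>) (Suc j))) * ?q"
    unfolding Yf_def using True by simp
  have g: "gf l n \<alpha> m k D (grw \<omega>) (vvw \<omega>) j = 2 powr (?s - ?S) * ?q"
    unfolding gf_def using True Rj by simp
  show ?thesis
  proof (cases "Xf l n m k (grw \<omega>) (vvw \<omega>) j")
    case X: True
    have "2 powr (?s - real (Sf l n m k (grw \<omega>) (vvw \<omega>) (Suc j))) = 2 powr ((?s - ?S) - 1)"
      using X by (simp add: Sf_Suc algebra_simps)
    also have "\<dots> = 2 powr (?s - ?S) * (1 - 1/2)" by (simp add: powr_diff)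
    finally have e: "2 powr (?s - real (Sf l n m k (grw \<omega>) (vvw \<omega>) (Suc j))) = 2 powr (?s - ?S) * (1 - 1/2)" .
    have "Yf l n \<alpha> m k D (grw \<omega>) (vvw \<omega>) (Suc j) = gf l n \<alpha> m k D (grw \<omega>) (vvw \<omega>) j * (1 - 1/2)"
      unfolding Y g e by (simp only: mult_ac)
    then show ?thesis using X w by (simp add: indicator_def)
  next
    case X: False
    show ?thesis using Y g X w by (simp add: indicator_def Sf_Suc)
  qed
next
  case False
  then have "Yf l n \<alpha> m k D (grw \<omega>) (vvw \<omega>) (Suc j) = 0" unfolding Yf_def by auto
  moreover have "0 \<le> gf l n \<alpha> m k D (grw \<omega>) (vvw \<omega>) j" by (rule gf_nonneg[OF n])
  moreover have "0 \<le> 1 - indicator {\<omega>\<in>space M. Xf l n m k (grw \<omega>) (vvw \<omega>) j} \<omega> / (2::real)"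
    by (simp add: indicator_def)
  ultimately show ?thesis by simp
qed

lemma count_pt:
  assumes w: "\<omega> \<in> space M" and n: "n \<ge> 1" and a: "\<alpha> > 0"
    and I: "If n \<alpha> m k (grw \<omega>)" and Rj: "Rf l n \<alpha> m (grw \<omega>) j"
  shows "pf l n m k (grw \<omega>) \<le> real (card (TT l n \<inter> Good l (Wf n m k (grw \<omega>)) (Gr E (m+j) \<omega>))) / real n ^ l"
proof -
  let ?W = "Wf n m k (grw \<omega>)" and ?G = "Gr E (m+j) \<omega>"
  let ?c = "L1 n ?G" and ?w = "real (card ?W)"
  have cw: "\<forall>y\<in>?W. finite (comp ?G y) \<and> card (comp ?G y) \<le> ?c"
    using comp_fin[OF Gr_edges[OF w]] card_comp_le_L1 W_sub by blast
  have "\<alpha> * real n > 0" using a n by simp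
  then have wpos: "?w > 0" using I unfolding If_def by linarith
  have cl: "real ?c * real l ^ 2 \<le> ?w"
  proof (cases "l = 0")
    case True then show ?thesis by simp
  next
    case False
    then have "real l ^ 2 > 0" by simp
    have "real ?c * real l ^ 2 \<le> \<alpha> / real l ^ 2 * real n * real l ^ 2"
      using Rj unfolding Rf_def by (intro mult_right_mono) auto
    also have "\<dots> = \<alpha> * real n" using \<open>real l ^ 2 > 0\<close> by simp
    also have "\<dots> \<le> ?w" using I unfolding If_def by simp
    finally show ?thesis .
  qed
  have lc: "l * ?c \<le> card ?W"
  proof -
    have "real l \<le> real l ^ 2" by (cases l) (auto simp: power2_eq_square)
    then have "real l * real ?c \<le> real ?c * real l ^ 2" by (simp add: mult.commute mult_right_mono)
    then have "real (l * ?c) \<le> real (card ?W)" using cl by simp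
    then show ?thesis by (simp only: of_nat_le_iff)
  qed
  have "?w ^ l / 2 \<le> (\<Prod>i<l. ?w - real i * real ?c)"
    by (rule prod_half[OF wpos _ cl]) simp
  also have "\<dots> \<le> real (card (Good l ?W ?G))"
    by (rule count_ge[OF W_fin cw lc])
  also have "Good l ?W ?G = TT l n \<inter> Good l ?W ?G"
  proof -
    have "Good l ?W ?G \<subseteq> TT l n" using W_sub[of m k "grw \<omega>"] unfolding Good_def TT_def by blast
    then show ?thesis by (simp add: Int_absorb1)
  qed
  finally have "?w ^ l / 2 \<le> real (card (TT l n \<inter> Good l ?W ?G))" .
  then have "?w ^ l / 2 / real n ^ l \<le> real (card (TT l n \<inter> Good l ?W ?G)) / real n ^ l"
    using n by (intro divide_right_mono) auto
  moreover have "pf l n m k (grw \<omega>) = ?w ^ l / 2 / real n ^ l"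
    unfolding pf_def by (simp add: power_divide)
  ultimately show ?thesis by simp
qed

end

context rule begin

lemma X_rep: "\<forall>\<omega>\<in>space M. Xf l n m k (grw \<omega>) (vvw \<omega>) j
   = (\<lambda>u. Xf l n m k (\<lambda>i. GrH i u) (\<lambda>i. fst (u i)) j) (H (m + Suc j) \<omega>)"
  using agree.X_cong[OF agree_H] by simp

lemma p_rep: "m \<le> K \<Longrightarrow> \<forall>\<omega>\<in>space M. pf l n m k (grw \<omega>) = (\<lambda>u. pf l n m k (\<lambda>i. GrH i u)) (H K \<omega>)"
  unfolding pf_def using agree.W_cong[OF agree_H] by simp

lemma Xset_sets: "{\<omega>\<in>space M. Xf l n m k (grw \<omega>) (vvw \<omega>) j} \<in> sets M"
  by (rule fH_set(2)[OF X_rep])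

lemma step_int:
  assumes n: "n \<ge> 1" and a: "\<alpha> > 0" and j: "j < D"
  shows "(\<integral>\<omega>. Yf l n \<alpha> m k D (grw \<omega>) (vvw \<omega>) (Suc j) \<partial>M) \<le> (\<integral>\<omega>. Yf l n \<alpha> m k D (grw \<omega>) (vvw \<omega>) j \<partial>M)"
proof -
  let ?Y = "\<lambda>j \<omega>. Yf l n \<alpha> m k D (grw \<omega>) (vvw \<omega>) j"
  let ?g = "\<lambda>\<omega>. gf l n \<alpha> m k D (grw \<omega>) (vvw \<omega>) j"
  let ?X = "{\<omega>\<in>space M. Xf l n m k (grw \<omega>) (vvw \<omega>) j}"
  let ?Gd = "\<lambda>\<omega>. Good l (Wf n m k (grw \<omega>)) (Gr E (m+j) \<omega>)"
  let ?p = "\<lambda>\<omega>. pf l n m k (grw \<omega>)"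
  let ?c = "\<lambda>\<omega>. real (card (TT l n \<inter> ?Gd \<omega>)) / real n ^ l"
  have gi: "integrable M ?g" by (rule fH_int[OF g_rep])
  have gXi: "integrable M (\<lambda>\<omega>. ?g \<omega> * indicator ?X \<omega>)"
    by (rule integrable_real_mult_indicator[OF Xset_sets gi])
  have Yi: "integrable M (?Y j')" for j' by (rule fH_int[OF Y_rep])
  have grep: "\<forall>\<omega>\<in>space M. ?g \<omega> * ?c \<omega> =
     (\<lambda>u. gf l n \<alpha> m k D (\<lambda>i. GrH i u) (\<lambda>i. fst (u i)) j * (real (card (TT l n \<inter> Good l (Wf n m k (\<lambda>i. GrH i u)) (GrH (m+j) u))) / real n ^ l)) (H (m+j) \<omega>)"
    using g_rep[of \<alpha> m k D j] Gd_rep[of m k j] by simp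
  have gci: "integrable M (\<lambda>\<omega>. ?g \<omega> * ?c \<omega>)" by (rule fH_int[OF grep])
  have gprep: "\<forall>\<omega>\<in>space M. ?g \<omega> * ?p \<omega> =
     (\<lambda>u. gf l n \<alpha> m k D (\<lambda>i. GrH i u) (\<lambda>i. fst (u i)) j * pf l n m k (\<lambda>i. GrH i u)) (H (m+j) \<omega>)"
    using g_rep[of \<alpha> m k D j] p_rep[of m "m+j" k] by simp
  have gpi: "integrable M (\<lambda>\<omega>. ?g \<omega> * ?p \<omega>)" by (rule fH_int[OF gprep])
  have Xeq: "?X = {\<omega>\<in>space M. v (Suc (m+j)) \<omega> \<in> ?Gd \<omega>}" unfolding Xf_def by simp
  have "(\<integral>\<omega>. ?Y (Suc j) \<omega> \<partial>M) \<le> (\<integral>\<omega>. ?g \<omega> - (?g \<omega> * indicator ?X \<omega>) / 2 \<partial>M)"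
  proof (rule integral_mono[OF Yi])
    show "integrable M (\<lambda>\<omega>. ?g \<omega> - (?g \<omega> * indicator ?X \<omega>) / 2)" using gi gXi by auto
    fix \<omega> assume w: "\<omega> \<in> space M"
    show "?Y (Suc j) \<omega> \<le> ?g \<omega> - (?g \<omega> * indicator ?X \<omega>) / 2"
      using step_pt[OF w n j, of \<alpha> m k] by (simp add: algebra_simps)
  qed
  also have "\<dots> = (\<integral>\<omega>. ?g \<omega> \<partial>M) - (\<integral>\<omega>. ?g \<omega> * indicator ?X \<omega> \<partial>M) / 2"
    using gi gXi by simp
  also have "(\<integral>\<omega>. ?g \<omega> * indicator ?X \<omega> \<partial>M) = (\<integral>\<omega>. ?g \<omega> * ?c \<omega> \<partial>M)"
    unfolding Xeq using IND_gd[OF g_rep Gd_rep, of \<alpha> m k D j] by (simp add: mult.assoc)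
  also have "(\<integral>\<omega>. ?g \<omega> * ?p \<omega> \<partial>M) \<le> (\<integral>\<omega>. ?g \<omega> * ?c \<omega> \<partial>M)"
  proof (rule integral_mono[OF gpi gci])
    fix \<omega> assume w: "\<omega> \<in> space M"
    show "?g \<omega> * ?p \<omega> \<le> ?g \<omega> * ?c \<omega>"
    proof (cases "If n \<alpha> m k (grw \<omega>) \<and> Rf l n \<alpha> m (grw \<omega>) j")
      case True
      then show ?thesis using count_pt[OF w n a, of m k j] gf_nonneg[OF n]
        by (intro mult_left_mono) auto
    next
      case False
      then show ?thesis unfolding gf_def by auto
    qed
  qed
  then have "(\<integral>\<omega>. ?g \<omega> \<partial>M) - (\<integral>\<omega>. ?g \<omega> * ?c \<omega> \<partial>M) / 2 \<le> (\<integral>\<omega>. ?g \<omega> \<partial>M) - (\<integral>\<omega>. ?g \<omega> * ?p \<omega> \<partial>M) / 2"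
    by simp
  also have "\<dots> = (\<integral>\<omega>. ?g \<omega> * (1 - ?p \<omega> / 2) \<partial>M)"
    using gi gpi by (simp add: algebra_simps)
  also have "\<dots> = (\<integral>\<omega>. ?Y j \<omega> \<partial>M)"
  proof (rule Bochner_Integration.integral_cong[OF refl])
    fix \<omega> assume "\<omega> \<in> space M"
    have "D - j = Suc (D - Suc j)" using j by simp
    then show "?g \<omega> * (1 - ?p \<omega> / 2) = ?Y j \<omega>"
      unfolding gf_def Yf_def by (simp add: mult.assoc mult.commute)
  qed
  finally show ?thesis .
qed

lemma int_chain:
  assumes n: "n \<ge> 1" and a: "\<alpha> > 0"
  shows "j \<le> D \<Longrightarrow> (\<integral>\<omega>. Yf l n \<alpha> m k D (grw \<omega>) (vvw \<omega>) j \<partial>M) \<le> (\<integral>\<omega>. Yf l n \<alpha> m k D (grw \<omega>) (vvw \<omega>) 0 \<partial>M)"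
proof (induction j)
  case 0 then show ?case by simp
next
  case (Suc j)
  then show ?case using step_int[OF n a, of j D m k] by simp
qed

definition Fset :: "real \<Rightarrow> nat \<Rightarrow> nat \<Rightarrow> nat \<Rightarrow> 'a set" where
  "Fset \<alpha> m k D = {\<omega>\<in>space M. real (Nge n (Gr E m \<omega>) k) \<ge> \<alpha> * real n \<and>
      \<not> real (L1 n (Gr E (m + D) \<omega>)) > \<alpha> / real l ^ 2 * real n}"

lemma Fset_sets: "Fset \<alpha> m k D \<in> sets M"
proof -
  have "\<forall>\<omega>\<in>space M. (real (Nge n (Gr E m \<omega>) k) \<ge> \<alpha> * real n \<and>
      \<not> real (L1 n (Gr E (m + D) \<omega>)) > \<alpha> / real l ^ 2 * real n) =
    (\<lambda>u. real (Nge n (GrH m u) k) \<ge> \<alpha> * real n \<and>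
      \<not> real (L1 n (GrH (m + D) u)) > \<alpha> / real l ^ 2 * real n) (H (m+D) \<omega>)"
  proof
    fix \<omega> assume w: "\<omega> \<in> space M"
    interpret agree "m+D" "grw \<omega>" "\<lambda>i. GrH i (H (m+D) \<omega>)" "vvw \<omega>" "\<lambda>i. fst (H (m+D) \<omega> i)"
      by (rule agree_H[OF w])
    show "(real (Nge n (Gr E m \<omega>) k) \<ge> \<alpha> * real n \<and>
      \<not> real (L1 n (Gr E (m + D) \<omega>)) > \<alpha> / real l ^ 2 * real n) =
    (\<lambda>u. real (Nge n (GrH m u) k) \<ge> \<alpha> * real n \<and>
      \<not> real (L1 n (GrH (m + D) u)) > \<alpha> / real l ^ 2 * real n) (H (m+D) \<omega>)"
      using ag[of m] ag[of "m+D"] by simp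
  qed
  then show ?thesis unfolding Fset_def by (rule fH_set(2))
qed

lemma fail_bound:
  assumes n: "n \<ge> 1" and a: "\<alpha> > 0" and k: "k \<ge> 1"
  shows "measure M (Fset \<alpha> m k D) \<le> (\<integral>\<omega>. Yf l n \<alpha> m k D (grw \<omega>) (vvw \<omega>) 0 \<partial>M)"
proof -
  have "measure M (Fset \<alpha> m k D) = (\<integral>\<omega>. indicator (Fset \<alpha> m k D) \<omega> \<partial>M)"
    using Fset_sets by (simp add: Int_absorb2 Fset_def)
  also have "\<dots> \<le> (\<integral>\<omega>. Yf l n \<alpha> m k D (grw \<omega>) (vvw \<omega>) D \<partial>M)"
  proof (rule integral_mono)
    show "integrable M (indicator (Fset \<alpha> m k D) :: 'a \<Rightarrow> real)"
      using Fset_sets emeasure_finite by (simp add: less_top[symmetric])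
    show "integrable M (\<lambda>\<omega>. Yf l n \<alpha> m k D (grw \<omega>) (vvw \<omega>) D)" by (rule fH_int[OF Y_rep])
    fix \<omega> assume w: "\<omega> \<in> space M"
    show "indicator (Fset \<alpha> m k D) \<omega> \<le> Yf l n \<alpha> m k D (grw \<omega>) (vvw \<omega>) D"
    proof (cases "\<omega> \<in> Fset \<alpha> m k D")
      case True
      then show ?thesis using fail_Y[OF w n k a] unfolding Fset_def by simp
    next
      case False
      then show ?thesis using Yf_nonneg[OF n] by simp
    qed
  qed
  also have "\<dots> \<le> (\<integral>\<omega>. Yf l n \<alpha> m k D (grw \<omega>) (vvw \<omega>) 0 \<partial>M)"
    by (rule int_chain[OF n a]) simp
  finally show ?thesis .
qed

end

lemma ln2_le: "ln (2::real) \<le> 3/4"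
proof -
  have "1 + 3/4 + (3/4)^2/2 \<le> exp (3/4::real)" by (rule exp_lower_Taylor_quadratic) simp
  then have "2 \<le> exp (3/4::real)" by (simp add: power2_eq_square)
  then show ?thesis using ln_ge_iff[of 2 "3/4"] by (metis exp_le_cancel_iff exp_ln zero_less_numeral)
qed

lemma Y0_bound:
  fixes \<alpha> :: real
  assumes n: "n \<ge> 2" and l: "l \<ge> 2" and k: "k \<ge> 1" and a: "0 < \<alpha>" "\<alpha> \<le> 1"
    and kb: "real k \<le> \<alpha> / 16 * (real n / ln (real n))"
    and D: "D = nat \<lceil>4 / \<alpha> ^ (l - 1) * (real n / real k)\<rceil>"
  shows "Yf l n \<alpha> m k D gr vv 0 \<le> 1 / real n ^ 4"
proof (cases "If n \<alpha> m k gr \<and> Rf l n \<alpha> m gr 0")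
  case False
  then have "Yf l n \<alpha> m k D gr vv 0 = 0" unfolding Yf_def by (simp only: if_False)
  then show ?thesis by simp
next
  case True
  let ?w = "real (card (Wf n m k gr))"
  let ?s = "sf n m k gr" and ?p = "pf l n m k gr"
  have npos: "real n > 0" using n by simp
  have kpos: "real k > 0" using k by simp
  have wa: "\<alpha> * real n \<le> ?w" using True unfolding If_def by simp
  have wn: "?w \<le> real n" using Wf_card[of n m k gr] by simp
  have S0: "Sf l n m k gr vv 0 = 0" unfolding Sf_def by simp
  have Y: "Yf l n \<alpha> m k D gr vv 0 = 2 powr ?s * (1 - ?p / 2) ^ D"
    unfolding Yf_def using True S0 by simp
  have q0: "0 \<le> 1 - ?p / 2" using q_ge[of n l m k gr] n by simp
  have "1 - ?p / 2 \<le> exp (- (?p / 2))" using exp_ge_add_one_self[of "- (?p/2)"] by simp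
  then have "(1 - ?p / 2) ^ D \<le> exp (- (?p / 2)) ^ D" using q0 by (intro power_mono) auto
  also have "\<dots> = exp (- (?p / 2 * real D))" by (simp add: exp_of_nat_mult[symmetric] mult.commute)
  finally have qD: "(1 - ?p / 2) ^ D \<le> exp (- (?p / 2 * real D))" .
  have ratio: "\<alpha> \<le> ?w / real n" using wa npos by (simp add: field_simps)
  have "?p / 2 * real D \<ge> ?s"
  proof -
    have Dge: "real D \<ge> 4 / \<alpha> ^ (l - 1) * (real n / real k)" unfolding D by (rule real_nat_ceiling_ge)
    have "(?w / real n) ^ l = (?w / real n) * (?w / real n) ^ (l - 1)"
      using l by (metis Suc_diff_1 le_trans one_le_numeral not_one_le_zero power_Suc zero_less_iff_neq_zero linorder_not_le)
    also have "\<dots> \<ge> (?w / real n) * \<alpha> ^ (l - 1)"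
      using ratio a by (intro mult_left_mono power_mono) auto
    finally have pw: "(?w / real n) ^ l \<ge> (?w / real n) * \<alpha> ^ (l - 1)" .
    have ap: "\<alpha> ^ (l - 1) > 0" using a by simp
    have "?s = (?w / real n) * \<alpha> ^ (l - 1) / 4 * (4 / \<alpha> ^ (l - 1) * (real n / real k))"
    proof -
      have "(?w / real n) * \<alpha> ^ (l - 1) / 4 * (4 / \<alpha> ^ (l - 1) * (real n / real k))
          = ?w * (\<alpha> ^ (l - 1) / \<alpha> ^ (l - 1)) * (real n / real n) / real k" by (simp add: field_simps)
      also have "\<dots> = ?w / real k"
      proof -
        have "\<alpha> ^ (l - 1) / \<alpha> ^ (l - 1) = 1" by (rule divide_self) (use ap in linarith)
        moreover have "real n / real n = 1" using npos by simp
        ultimately show ?thesis by simp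
      qed
      finally show ?thesis unfolding sf_def by simp
    qed
    also have "\<dots> \<le> ?p / 2 * (4 / \<alpha> ^ (l - 1) * (real n / real k))"
      unfolding pf_def using pw ap npos kpos by (intro mult_right_mono) auto
    also have "\<dots> \<le> ?p / 2 * real D"
      using Dge pf_le(2)[of n l m k gr] n by (intro mult_left_mono) auto
    finally show ?thesis .
  qed
  then have "exp (- (?p / 2 * real D)) \<le> exp (- ?s)" by simp
  with qD have qD2: "(1 - ?p / 2) ^ D \<le> exp (- ?s)" by linarith
  have "Yf l n \<alpha> m k D gr vv 0 \<le> 2 powr ?s * exp (- ?s)"
    unfolding Y by (rule mult_left_mono[OF qD2]) simp
  also have "2 powr ?s * exp (- ?s) = exp (?s * (ln 2 - 1))"
    by (simp add: powr_def exp_add[symmetric] algebra_simps)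
  also have "\<dots> \<le> exp (- 4 * ln (real n))"
  proof -
    have lnpos: "ln (real n) > 0" using n by simp
    have "real k * (16 * ln (real n)) \<le> \<alpha> * real n"
    proof -
      have "real k * (16 * ln (real n)) \<le> \<alpha> / 16 * (real n / ln (real n)) * (16 * ln (real n))"
        using kb lnpos by (intro mult_right_mono) auto
      also have "\<dots> = \<alpha> * real n" using lnpos by (simp add: field_simps)
      finally show ?thesis .
    qed
    then have "16 * ln (real n) \<le> \<alpha> * real n / real k" using kpos by (simp add: field_simps)
    also have "\<dots> \<le> ?s" unfolding sf_def using wa kpos by (intro divide_right_mono) auto
    finally have s16: "16 * ln (real n) \<le> ?s" .
    have "ln 2 - 1 \<le> (-1/4::real)" using ln2_le by simp
    then have "?s * (ln 2 - 1) \<le> ?s * (-1/4)" using s16 lnpos by (intro mult_left_mono) auto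
    also have "\<dots> \<le> - 4 * ln (real n)" using s16 by simp
    finally show ?thesis by simp
  qed
  also have "\<dots> = 1 / real n ^ 4"
  proof -
    have "exp (- 4 * ln (real n)) = inverse (exp (ln (real n)) ^ 4)"
      by (simp add: exp_minus[symmetric] exp_of_nat_mult[symmetric])
    then show ?thesis using npos by (simp add: divide_inverse)
  qed
  finally show ?thesis .
qed

lemma ln2_ge_half: "1/2 \<le> ln (2::real)"
proof -
  have "ln (1/2::real) \<le> 1/2 - 1" by (rule ln_le_minus_one) simp
  moreover have "ln (1/2::real) = - ln 2" using ln_inverse[of "2::real"] by (simp add: inverse_eq_divide)
  ultimately show ?thesis by simp
qed

theorem lemma1:
  fixes M :: "'a measure" and l n :: nat and F :: "nat \<Rightarrow> 'a measure"
    and v :: "nat \<Rightarrow> 'a \<Rightarrow> nat list" and E :: "nat \<Rightarrow> 'a \<Rightarrow> nat set set" and \<alpha> :: real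
  assumes "l \<ge> 2" and "n \<ge> 1"
    and "ell_vertex_rule M l n F v E"
    and "0 < \<alpha>" and "\<alpha> \<le> 1"
  shows "measure M {\<omega> \<in> space M. event_C n l \<alpha> E \<omega>} \<ge> 1 - 1 / real n"
proof -
  interpret rule M l n F v E by unfold_locales (rule assms(3))
  show ?thesis
  proof (cases "n = 1")
    case True
    then show ?thesis by simp
  next
    case False
    then have n2: "n \<ge> 2" using assms(2) by simp
    have npos: "real n > 0" using n2 by simp
    define x0 where "x0 = \<alpha> / 16 * (real n / ln (real n))"
    define K0 where "K0 = nat \<lfloor>x0\<rfloor>"
    define P where "P = {(m,k). m \<le> n^2 \<and> 1 \<le> k \<and> real k \<le> x0}"
    define Dk where "Dk = (\<lambda>k::nat. nat \<lceil>4 / \<alpha> ^ (l - 1) * (real n / real k)\<rceil>)"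
    define FF where "FF = (\<lambda>(m,k). Fset \<alpha> m k (Dk k))"
    have PS: "P \<subseteq> {..n^2} \<times> {1..K0}"
      unfolding P_def K0_def using le_nat_floor by auto
    have Pfin: "finite P" by (rule finite_subset[OF PS]) simp
    have cardP: "card P \<le> (n^2 + 1) * K0"
      using card_mono[OF _ PS] by (simp add: card_cartesian_product)
    have lnn: "ln (real n) \<ge> 1/2"
    proof -
      have "ln (2::real) \<le> ln (real n)" using n2 by simp
      then show ?thesis using ln2_ge_half by simp
    qed
    have K0b: "real K0 \<le> real n / 8"
    proof -
      have "x0 \<ge> 0" unfolding x0_def using assms(4) npos lnn by simp
      then have "real K0 \<le> x0" unfolding K0_def by simp
      also have "x0 \<le> 1 / 16 * (real n / ln (real n))"
        unfolding x0_def using assms(5) npos lnn by (intro mult_right_mono) auto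
      also have "real n / ln (real n) \<le> real n / (1/2)"
        using npos lnn n2 by (intro divide_left_mono) auto
      then have "1 / 16 * (real n / ln (real n)) \<le> 1/16 * (real n / (1/2))" by simp
      finally show ?thesis by simp
    qed
    have Fb: "measure M (FF p) \<le> 1 / real n ^ 4" if p: "p \<in> P" for p
    proof -
      obtain m k where pmk: "p = (m,k)" by (cases p)
      have k: "k \<ge> 1" and kb: "real k \<le> \<alpha> / 16 * (real n / ln (real n))"
        using p pmk unfolding P_def x0_def by auto
      have "measure M (FF p) \<le> (\<integral>\<omega>. Yf l n \<alpha> m k (Dk k) (grw \<omega>) (vvw \<omega>) 0 \<partial>M)"
        unfolding FF_def pmk using fail_bound[OF assms(2) assms(4) k] by simp
      also have "\<dots> \<le> (\<integral>\<omega>. 1 / real n ^ 4 \<partial>M)"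
      proof (rule integral_mono)
        show "integrable M (\<lambda>\<omega>. Yf l n \<alpha> m k (Dk k) (grw \<omega>) (vvw \<omega>) 0)" by (rule fH_int[OF Y_rep])
        show "integrable M (\<lambda>\<omega>. 1 / real n ^ 4)" by simp
        fix \<omega> show "Yf l n \<alpha> m k (Dk k) (grw \<omega>) (vvw \<omega>) 0 \<le> 1 / real n ^ 4"
          by (rule Y0_bound[OF n2 assms(1) k assms(4) assms(5) kb]) (simp add: Dk_def)
      qed
      also have "\<dots> = 1 / real n ^ 4" using prob_space by simp
      finally show ?thesis .
    qed
    have FFs: "FF ` P \<subseteq> sets M" unfolding FF_def using Fset_sets by auto
    have Us: "(\<Union>p\<in>P. FF p) \<in> sets M" using FFs Pfin by blast
    have "measure M (\<Union>p\<in>P. FF p) \<le> (\<Sum>p\<in>P. measure M (FF p))"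
      by (rule finite_measure_subadditive_finite[OF Pfin FFs])
    also have "\<dots> \<le> (\<Sum>p\<in>P. 1 / real n ^ 4)" by (rule sum_mono) (rule Fb)
    also have "\<dots> = real (card P) / real n ^ 4" by simp
    also have "\<dots> \<le> 1 / real n"
    proof -
      have "real (card P) \<le> (real n ^ 2 + 1) * real K0" using of_nat_mono[OF cardP] by (simp add: algebra_simps)
      also have "\<dots> \<le> (2 * real n ^ 2) * (real n / 8)"
      proof (intro mult_mono K0b)
        have "1 \<le> real n" using n2 by simp
        then have "1 \<le> real n ^ 2" by (rule one_le_power)
        then show "real n ^ 2 + 1 \<le> 2 * real n ^ 2" by linarith
      qed auto
      also have "\<dots> \<le> real n ^ 3" by (simp add: power2_eq_square power3_eq_cube)
      finally have "real (card P) \<le> real n ^ 3" .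
      then have "real (card P) / real n ^ 4 \<le> real n ^ 3 / real n ^ 4"
        using npos by (intro divide_right_mono) auto
      also have "real n ^ 3 / real n ^ 4 = 1 / real n" using npos by (simp add: field_simps power_eq_if)
      finally show ?thesis .
    qed
    finally have mU: "measure M (\<Union>p\<in>P. FF p) \<le> 1 / real n" .
    have eq: "{\<omega> \<in> space M. event_C n l \<alpha> E \<omega>} = space M - (\<Union>p\<in>P. FF p)"
    proof (intro equalityI subsetI)
      fix \<omega> assume "\<omega> \<in> {\<omega> \<in> space M. event_C n l \<alpha> E \<omega>}"
      then have w: "\<omega> \<in> space M" and C: "event_C n l \<alpha> E \<omega>" by auto
      have "\<omega> \<notin> FF p" if "p \<in> P" for p
      proof -
        obtain m k where pmk: "p = (m,k)" by (cases p)
        have "m \<le> n^2" "1 \<le> k" "real k \<le> \<alpha> / 16 * (real n / ln (real n))"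
          using that pmk unfolding P_def x0_def by auto
        then show ?thesis using C unfolding event_C_def FF_def pmk Fset_def Dk_def by auto
      qed
      then show "\<omega> \<in> space M - (\<Union>p\<in>P. FF p)" using w by blast
    next
      fix \<omega> assume a: "\<omega> \<in> space M - (\<Union>p\<in>P. FF p)"
      then have w: "\<omega> \<in> space M" by blast
      have "event_C n l \<alpha> E \<omega>" unfolding event_C_def
      proof (intro allI impI)
        fix m k assume h: "m \<le> n ^ 2 \<and> 1 \<le> k \<and> real k \<le> \<alpha> / 16 * (real n / ln (real n))
          \<and> real (Nge n (Gr E m \<omega>) k) \<ge> \<alpha> * real n"
        then have "(m,k) \<in> P" unfolding P_def x0_def by auto
        then have "\<omega> \<notin> FF (m,k)" using a by blast
        then show "real (L1 n (Gr E (m + nat \<lceil>4 / \<alpha> ^ (l - 1) * (real n / real k)\<rceil>) \<omega>))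
              > \<alpha> / real l ^ 2 * real n"
          using h w unfolding FF_def Fset_def Dk_def by auto
      qed
      then show "\<omega> \<in> {\<omega> \<in> space M. event_C n l \<alpha> E \<omega>}" using w by blast
    qed
    have "measure M {\<omega> \<in> space M. event_C n l \<alpha> E \<omega>} = 1 - measure M (\<Union>p\<in>P. FF p)"
      unfolding eq by (rule prob_compl[OF Us])
    then show ?thesis using mU by simp
  qed
qed

end
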